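(* Let $V\colon\mathbf{ZZ}\to\mathbf{Vec}$ be an indecomposable zigzag persistence module. Then there exists an integer $t\geq 0$ such that for every even integer $i\ge t$ the map $f_i\colon V_i\to V_{i+1}$ is injective and the map $g_i\colon V_i\to V_{i-1}$ is surjective. Dually, there exists an integer $s\le 0$ such that for every even integer $i\le s$ the map $f_i$ is surjective and $g_i$ is injective.
   Context: Fix a field $\mathbb{F}$; $\mathbf{Vec}$ denotes the category of finite-dimensional $\mathbb{F}$-vector spaces. $\mathbf{ZZ}$ is the category whose objects are the integers, with non-identity morphisms $i\to i-1$ and $i\to i+1$ for every even integer $i$. A zigzag persistence module is a functor $V\colon\mathbf{ZZ}\to\mathbf{Vec}$, with $g_i=V(i\to i-1)\colon V_i\to V_{i-1}$ and $f_i=V(i\to i+1)\colon V_i\to V_{i+1}$ for even $i$. Direct sums are pointwise; $V$ is indecomposable if it is nonzero and there are no nonzero $U,W$ with $V\cong U\oplus W$. *)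

theory Defs
  imports Complex_Main
begin

definition lin_between ::
  "('a::field \<Rightarrow> 'v::ab_group_add \<Rightarrow> 'v) \<Rightarrow> 'v set \<Rightarrow> 'v set \<Rightarrow> ('v \<Rightarrow> 'v) \<Rightarrow> bool" where
  "lin_between scale S T h \<longleftrightarrow>
     h ` S \<subseteq> T \<and>
     (\<forall>x\<in>S. \<forall>y\<in>S. h (x + y) = h x + h y) \<and>
     (\<forall>c. \<forall>x\<in>S. h (scale c x) = scale c (h x))"

definition fd_subspace :: "('a::field \<Rightarrow> 'v::ab_group_add \<Rightarrow> 'v) \<Rightarrow> 'v set \<Rightarrow> bool" where
  "fd_subspace scale S \<longleftrightarrow> module.subspace scale S \<and> (\<exists>B. finite B \<and> module.span scale B = S)"

text \<open>The values of f i, g i outside V i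
  and for odd i are irrelevant.\<close>
definition zz_module ::
  "('a::field \<Rightarrow> 'v::ab_group_add \<Rightarrow> 'v) \<Rightarrow> (int \<Rightarrow> 'v set) \<Rightarrow> (int \<Rightarrow> 'v \<Rightarrow> 'v) \<Rightarrow> (int \<Rightarrow> 'v \<Rightarrow> 'v) \<Rightarrow> bool" where
  "zz_module scale V f g \<longleftrightarrow>
     vector_space scale \<and>
     (\<forall>i. fd_subspace scale (V i)) \<and>
     (\<forall>i. even i \<longrightarrow> lin_between scale (V i) (V (i + 1)) (f i) \<and> lin_between scale (V i) (V (i - 1)) (g i))"

definition zz_submodule ::
  "('a::field \<Rightarrow> 'v::ab_group_add \<Rightarrow> 'v) \<Rightarrow> (int \<Rightarrow> 'v set) \<Rightarrow> (int \<Rightarrow> 'v \<Rightarrow> 'v) \<Rightarrow> (int \<Rightarrow> 'v \<Rightarrow> 'v) \<Rightarrow> (int \<Rightarrow> 'v set) \<Rightarrow> bool" where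
  "zz_submodule scale V f g U \<longleftrightarrow>
     (\<forall>i. module.subspace scale (U i) \<and> U i \<subseteq> V i) \<and>
     (\<forall>i. even i \<longrightarrow> f i ` U i \<subseteq> U (i + 1) \<and> g i ` U i \<subseteq> U (i - 1))"

definition zz_nonzero :: "(int \<Rightarrow> 'v::zero set) \<Rightarrow> bool" where
  "zz_nonzero V \<longleftrightarrow> (\<exists>i. V i \<noteq> {0})"

text \<open>Indecomposable: nonzero, and not an (internal) direct sum of two nonzero submodules.
  Internal direct sum decompositions correspond exactly to isomorphisms V \<cong> U \<oplus> W.\<close>
definition zz_indecomposable ::
  "('a::field \<Rightarrow> 'v::ab_group_add \<Rightarrow> 'v) \<Rightarrow> (int \<Rightarrow> 'v set) \<Rightarrow> (int \<Rightarrow> 'v \<Rightarrow> 'v) \<Rightarrow> (int \<Rightarrow> 'v \<Rightarrow> 'v) \<Rightarrow> bool" where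
  "zz_indecomposable scale V f g \<longleftrightarrow>
     zz_nonzero V \<and>
     \<not> (\<exists>U W. zz_submodule scale V f g U \<and> zz_submodule scale V f g W \<and>
              zz_nonzero U \<and> zz_nonzero W \<and>
              (\<forall>i. U i \<inter> W i = {0} \<and> {u + w | u w. u \<in> U i \<and> w \<in> W i} = V i))"

end

theory Submission
  imports Defs
begin

context vector_space begin


lemma compl_exists:
  assumes W: "subspace W" and S: "subspace S" and WS: "W \<subseteq> S" and xS: "x \<in> S" and xW: "x \<notin> W"
  shows "\<exists>H. subspace H \<and> W \<subseteq> H \<and> H \<subseteq> S \<and> x \<notin> H \<and> (\<forall>v\<in>S. \<exists>c. v - c *s x \<in> H)"
proof -
  obtain A where A: "A \<subseteq> W" "independent A" "W \<subseteq> span A"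
    by (rule basis_exists[of W])
  have spA: "span A = W" using span_subspace[OF A(1) A(3) W] .
  have xA: "x \<notin> span A" using spA xW by simp
  have ind: "independent (insert x A)" using independent_insertI[OF xA A(2)] .
  have iS: "insert x A \<subseteq> S" using A(1) WS xS by blast
  obtain B where B: "insert x A \<subseteq> B" "B \<subseteq> S" "independent B" "S \<subseteq> span B"
    by (rule maximal_independent_subset_extend[OF iS ind])
  define H where "H = span (B - {x})"
  have H1: "subspace H" unfolding H_def by (rule subspace_span)
  have "x \<notin> A" using xA span_superset by blast
  then have "A \<subseteq> B - {x}" using B(1) by blast
  then have "span A \<subseteq> H" unfolding H_def by (rule span_mono)
  then have H2: "W \<subseteq> H" using spA by simp
  have "B - {x} \<subseteq> S" using B(2) by blast
  then have H3: "H \<subseteq> S" unfolding H_def by (rule span_minimal[OF _ S])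
  have xB: "x \<in> B" using B(1) by blast
  have H4: "x \<notin> H"
  proof
    assume "x \<in> H"
    then have "\<exists>a\<in>B. a \<in> span (B - {a})" using xB unfolding H_def by blast
    then have "dependent B" by (simp add: dependent_def)
    then show False using B(3) by simp
  qed
  have eqB: "insert x (B - {x}) = B" using xB by blast
  have H5: "\<forall>v\<in>S. \<exists>c. v - c *s x \<in> H"
  proof
    fix v assume "v \<in> S"
    then have "v \<in> span B" using B(4) by blast
    then have "v \<in> span (insert x (B - {x}))" by (simp only: eqB)
    then show "\<exists>c. v - c *s x \<in> H" unfolding H_def by (simp only: span_breakdown_eq)
  qed
  show ?thesis using H1 H2 H3 H4 H5 by blast
qed

lemma dim_le_sub:
  assumes "T \<subseteq> U" "U \<subseteq> span B" "finite B"
  shows "dim T \<le> dim U"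
proof -
  obtain AU where AU: "AU \<subseteq> U" "independent AU" "U \<subseteq> span AU" "card AU = dim U"
    by (rule basis_exists[of U])
  have "AU \<subseteq> span B" using AU(1) assms(2) by (rule order_trans)
  then have fin: "finite AU" using independent_span_bound[OF assms(3) AU(2)] by simp
  have "T \<subseteq> span AU" using assms(1) AU(3) by (rule order_trans)
  then have "dim T \<le> card AU" by (rule dim_le_card[OF _ fin])
  then show ?thesis using AU(4) by simp
qed

lemma dim_lt_sub:
  assumes "T \<subseteq> U" "T \<noteq> U" "U \<subseteq> span B" "finite B" "subspace T"
  shows "dim T < dim U"
proof -
  obtain AU where AU: "AU \<subseteq> U" "independent AU" "U \<subseteq> span AU" "card AU = dim U"
    by (rule basis_exists[of U])
  obtain AT where AT: "AT \<subseteq> T" "independent AT" "T \<subseteq> span AT" "card AT = dim T"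
    by (rule basis_exists[of T])
  have spT: "span AT = T" using span_subspace[OF AT(1) AT(3) assms(5)] .
  obtain v where v: "v \<in> U" "v \<notin> T" using assms(1,2) by blast
  have vA: "v \<notin> span AT" using spT v(2) by simp
  have ind: "independent (insert v AT)" by (rule independent_insertI[OF vA AT(2)])
  have AU2: "AU \<subseteq> span B" using AU(1) assms(3) by (rule order_trans)
  have finAU: "finite AU" using independent_span_bound[OF assms(4) AU(2) AU2] by simp
  have "insert v AT \<subseteq> U" using AT(1) assms(1) v(1) by blast
  then have sub: "insert v AT \<subseteq> span AU" using AU(3) by (rule order_trans)
  have c: "finite (insert v AT) \<and> card (insert v AT) \<le> card AU"
    by (rule independent_span_bound[OF finAU ind sub])
  have "v \<notin> AT" using v AT(1) by blast
  then have "card (insert v AT) = Suc (card AT)" using c by simp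
  then show ?thesis using c AT(4) AU(4) by simp
qed


lemma chain_stab:
  assumes sub: "\<And>m. subspace (S m)" and dec: "\<And>m. S (Suc m) \<subseteq> S m"
    and fin: "finite B" and S0: "S 0 \<subseteq> span B"
  shows "\<exists>m0. \<forall>m\<ge>m0. S m = S m0"
proof -
  have mono: "S m \<subseteq> S k" if "k \<le> m" for k m
    using that
  proof (induction m)
    case 0 then show ?case by simp
  next
    case (Suc m)
    show ?case
    proof (cases "k = Suc m")
      case True then show ?thesis by simp
    next
      case False
      then have "k \<le> m" using Suc.prems by simp
      then have "S m \<subseteq> S k" by (rule Suc.IH)
      then show ?thesis using dec[of m] by (rule order_trans[rotated])
    qed
  qed
  have inB: "S m \<subseteq> span B" for m using order_trans[OF mono[OF le0] S0] .
  define k where "k = (LEAST k. \<exists>m. dim (S m) = k)"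
  have "\<exists>m. dim (S m) = k" unfolding k_def
    by (rule LeastI[of "\<lambda>k. \<exists>m. dim (S m) = k" "dim (S 0)"]) auto
  then obtain m0 where m0: "dim (S m0) = k" by blast
  have kle: "k \<le> dim (S m)" for m unfolding k_def by (rule Least_le) auto
  show ?thesis
  proof (intro exI allI impI)
    fix m assume "m0 \<le> m"
    then have Sm: "S m \<subseteq> S m0" by (rule mono)
    show "S m = S m0"
    proof (rule ccontr)
      assume ne: "S m \<noteq> S m0"
      have "dim (S m) < dim (S m0)"
        by (rule dim_lt_sub[OF Sm ne inB[of m0] fin sub[of m]])
      then show False using kle[of m] m0 by simp
    qed
  qed
qed
end

definition ssum :: "'v::ab_group_add set \<Rightarrow> 'v set \<Rightarrow> 'v set" where
  "ssum A B = {a + b | a b. a \<in> A \<and> b \<in> B}"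

lemma ssum_left: "0 \<in> B \<Longrightarrow> A \<subseteq> ssum A B"
  unfolding ssum_def by force
lemma ssum_right: "0 \<in> A \<Longrightarrow> B \<subseteq> ssum A B"
  unfolding ssum_def by force

locale zz = vector_space scale
  for scale :: "'a::field \<Rightarrow> 'v::ab_group_add \<Rightarrow> 'v" +
  fixes V :: "int \<Rightarrow> 'v set" and f g :: "int \<Rightarrow> 'v \<Rightarrow> 'v"
  assumes Vsub: "subspace (V i)"
    and Vfin: "\<exists>B. finite B \<and> span B = V i"
    and fmap: "even i \<Longrightarrow> x \<in> V i \<Longrightarrow> f i x \<in> V (i+1)"
    and fadd: "even i \<Longrightarrow> x \<in> V i \<Longrightarrow> y \<in> V i \<Longrightarrow> f i (x + y) = f i x + f i y"
    and fscale: "even i \<Longrightarrow> x \<in> V i \<Longrightarrow> f i (scale c x) = scale c (f i x)"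
    and gmap: "even i \<Longrightarrow> x \<in> V i \<Longrightarrow> g i x \<in> V (i - 1)"
    and gadd: "even i \<Longrightarrow> x \<in> V i \<Longrightarrow> y \<in> V i \<Longrightarrow> g i (x + y) = g i x + g i y"
    and gscale: "even i \<Longrightarrow> x \<in> V i \<Longrightarrow> g i (scale c x) = scale c (g i x)"
begin

lemma V0[simp]: "0 \<in> V i" using Vsub subspace_0 by blast
lemma Vadd: "x \<in> V i \<Longrightarrow> y \<in> V i \<Longrightarrow> x + y \<in> V i" using Vsub subspace_add by blast
lemma Vscale: "x \<in> V i \<Longrightarrow> scale c x \<in> V i" using Vsub subspace_scale by blast
lemma Vdiff: "x \<in> V i \<Longrightarrow> y \<in> V i \<Longrightarrow> x - y \<in> V i" using Vsub subspace_diff by blast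

lemma f0[simp]: "even i \<Longrightarrow> f i 0 = 0"
  using fadd[of i 0 0] by simp
lemma g0[simp]: "even i \<Longrightarrow> g i 0 = 0"
  using gadd[of i 0 0] by simp
lemma fdiff: "even i \<Longrightarrow> x \<in> V i \<Longrightarrow> y \<in> V i \<Longrightarrow> f i (x - y) = f i x - f i y"
proof -
  assume a: "even i" "x \<in> V i" "y \<in> V i"
  have "f i (x - y) + f i y = f i x" using fadd[OF a(1) Vdiff[OF a(2,3)] a(3)] by simp
  then show ?thesis by (simp add: eq_diff_eq)
qed
lemma gdiff: "even i \<Longrightarrow> x \<in> V i \<Longrightarrow> y \<in> V i \<Longrightarrow> g i (x - y) = g i x - g i y"
proof -
  assume a: "even i" "x \<in> V i" "y \<in> V i"
  have "g i (x - y) + g i y = g i x" using gadd[OF a(1) Vdiff[OF a(2,3)] a(3)] by simp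
  then show ?thesis by (simp add: eq_diff_eq)
qed

lemma subspace_ssum: "subspace A \<Longrightarrow> subspace B \<Longrightarrow> subspace (ssum A B)"
  unfolding ssum_def by (rule subspace_sums)

lemma ssum_sub: "A \<subseteq> V i \<Longrightarrow> B \<subseteq> V i \<Longrightarrow> ssum A B \<subseteq> V i"
  unfolding ssum_def using Vadd by blast

lemma g_image_sub: assumes "even k" "subspace H" "H \<subseteq> V k" shows "subspace (g k ` H)"
  unfolding subspace_def
proof (intro conjI ballI allI)
  show "0 \<in> g k ` H" using assms subspace_0[OF assms(2)] by (metis g0 image_eqI)
  fix a b assume "a \<in> g k ` H" "b \<in> g k ` H"
  then obtain u w where "u \<in> H" "w \<in> H" "a = g k u" "b = g k w" by blast
  then show "a + b \<in> g k ` H" using assms gadd[of k u w] subspace_add[OF assms(2)]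
    by (metis image_eqI subsetD)
next
  fix c a assume "a \<in> g k ` H"
  then obtain u where "u \<in> H" "a = g k u" by blast
  then show "scale c a \<in> g k ` H" using assms gscale[of k u c] subspace_scale[OF assms(2)]
    by (metis image_eqI subsetD)
qed

lemma f_pre_sub: assumes "even k" "subspace H"
  shows "subspace {v \<in> V k. f k v \<in> H}"
  unfolding subspace_def
proof (intro conjI ballI allI)
  show "0 \<in> {v \<in> V k. f k v \<in> H}" using assms subspace_0[OF assms(2)] by simp
  fix a b assume "a \<in> {v \<in> V k. f k v \<in> H}" "b \<in> {v \<in> V k. f k v \<in> H}"
  then show "a + b \<in> {v \<in> V k. f k v \<in> H}" using assms fadd[of k a b] subspace_add[OF assms(2)] Vadd
    by simp
next
  fix c a assume "a \<in> {v \<in> V k. f k v \<in> H}"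
  then show "scale c a \<in> {v \<in> V k. f k v \<in> H}" using assms fscale[of k a c] subspace_scale[OF assms(2)] Vscale
    by simp
qed

end

context zz begin

definition compl :: "'v \<Rightarrow> 'v set \<Rightarrow> 'v set \<Rightarrow> 'v set \<Rightarrow> bool" where
  "compl x W H S \<longleftrightarrow> subspace H \<and> W \<subseteq> H \<and> H \<subseteq> S \<and> x \<notin> H \<and> (\<forall>v\<in>S. \<exists>c. v - scale c x \<in> H)"

lemma compl_some:
  assumes "subspace W" "subspace S" "W \<subseteq> S" "x \<in> S" "x \<notin> W"
  shows "compl x W (SOME H. compl x W H S) S"
proof -
  have "\<exists>H. compl x W H S" unfolding compl_def using compl_exists[OF assms] .
  then show ?thesis by (rule someI_ex)
qed

lemma GL:
  fixes n :: int and x :: "int \<Rightarrow> 'v" and R :: "int \<Rightarrow> 'v set" and C :: "'v set"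
  assumes X0: "\<And>k. k \<le> n \<Longrightarrow> x k \<in> V k"
    and X1: "\<And>k. even k \<Longrightarrow> k \<le> n \<Longrightarrow> g k (x k) = x (k-1)"
    and X2: "\<And>k. even k \<Longrightarrow> k < n \<Longrightarrow> x k \<noteq> 0 \<Longrightarrow> f k (x k) = x (k+1) \<and> x (k+1) \<noteq> 0"
    and X4: "x n \<noteq> 0" "x n \<notin> ssum (R n) C"
    and CC: "subspace C" "C \<subseteq> V n"
    and R0: "\<And>k. k \<le> n \<Longrightarrow> x k \<noteq> 0 \<Longrightarrow> subspace (R k) \<and> R k \<subseteq> V k"
    and R1: "\<And>k. even k \<Longrightarrow> k < n \<Longrightarrow> x (k-1) \<noteq> 0 \<Longrightarrow> f k ` R k \<subseteq> R (k+1)"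
    and R2: "\<And>k v. even k \<Longrightarrow> k \<le> n \<Longrightarrow> x (k-1) \<noteq> 0 \<Longrightarrow> v \<in> V k \<Longrightarrow> g k v \<in> R (k-1) \<Longrightarrow> v \<in> R k"
    and BB: "\<And>k. even k \<Longrightarrow> k < n \<Longrightarrow> x k = 0 \<Longrightarrow> x (k+1) \<noteq> 0 \<Longrightarrow> f k ` V k \<subseteq> R (k+1)"
  shows "\<exists>P Q. (\<forall>k\<le>n. subspace (P k) \<and> P k \<subseteq> V k \<and> subspace (Q k) \<and> Q k \<subseteq> V k
                  \<and> P k \<inter> Q k = {0} \<and> ssum (P k) (Q k) = V k)
            \<and> (\<forall>k. even k \<and> k \<le> n \<longrightarrow> g k ` P k \<subseteq> P (k-1) \<and> g k ` Q k \<subseteq> Q (k-1))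
            \<and> (\<forall>k. even k \<and> k < n \<longrightarrow> f k ` P k \<subseteq> P (k+1) \<and> f k ` Q k \<subseteq> Q (k+1))
            \<and> P n = range (\<lambda>c. scale c (x n)) \<and> C \<subseteq> Q n"
proof -
  define W0 where "W0 = ssum (R n) C"
  define step where "step = (\<lambda>(d::nat) Hd. let k = n - int d - 1 in
     if even k then {v \<in> V k. f k v \<in> Hd}
     else if x k = 0 then V k
     else (SOME H. compl (x k) (ssum (g (k+1) ` Hd) (R k)) H (V k)))"
  define Hr where "Hr = rec_nat (SOME H. compl (x n) W0 H (V n)) step"
  define H where "H k = Hr (nat (n - k))" for k
  have Hn: "H n = (SOME H. compl (x n) W0 H (V n))" unfolding H_def Hr_def by simp
  have Hstep: "H k = (if even k then {v \<in> V k. f k v \<in> H (k+1)}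
     else if x k = 0 then V k
     else (SOME Y. compl (x k) (ssum (g (k+1) ` H (k+1)) (R k)) Y (V k)))" if "k < n" for k
  proof -
    have e: "nat (n - k) = Suc (nat (n - (k+1)))" using that by simp
    have e2: "n - int (nat (n - (k+1))) - 1 = k" using that by simp
    have 1: "H k = step (nat (n - (k+1))) (H (k+1))" unfolding H_def Hr_def e by simp
    show ?thesis unfolding 1 step_def Let_def by (simp only: e2)
  qed
  define Inv where "Inv k \<longleftrightarrow> subspace (H k) \<and> H k \<subseteq> V k
     \<and> (x k \<noteq> 0 \<longrightarrow> x k \<notin> H k \<and> (\<forall>v\<in>V k. \<exists>c. v - scale c (x k) \<in> H k))
     \<and> (x k = 0 \<longrightarrow> H k = V k)
     \<and> (x k \<noteq> 0 \<and> (odd k \<or> k = n \<or> x (k-1) \<noteq> 0) \<longrightarrow> R k \<subseteq> H k)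
     \<and> (k = n \<longrightarrow> C \<subseteq> H k)
     \<and> (odd k \<and> x k \<noteq> 0 \<and> k < n \<longrightarrow> g (k+1) ` H (k+1) \<subseteq> H k)" for k
  have base: "Inv n"
  proof -
    have R0n: "subspace (R n)" "R n \<subseteq> V n" using R0[of n] X4(1) by auto
    have W0s: "subspace W0" unfolding W0_def by (rule subspace_ssum[OF R0n(1) CC(1)])
    have W0V: "W0 \<subseteq> V n" unfolding W0_def by (rule ssum_sub[OF R0n(2) CC(2)])
    have c: "compl (x n) W0 (H n) (V n)" unfolding Hn
      by (rule compl_some[OF W0s Vsub W0V X0[of n]]) (use X4(2) W0_def in auto)
    have "R n \<subseteq> W0" "C \<subseteq> W0" unfolding W0_def
      using ssum_left[OF subspace_0[OF CC(1)]] ssum_right[OF subspace_0[OF R0n(1)]] by auto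
    then show ?thesis using c X4(1) unfolding Inv_def compl_def by auto
  qed
  have stepinv: "Inv k" if kn: "k < n" and Ik1: "Inv (k+1)" for k
  proof (cases "even k")
    case True
    have Hk: "H k = {v \<in> V k. f k v \<in> H (k+1)}" using Hstep[OF kn] True by simp
    have I1: "subspace (H (k+1))" "H (k+1) \<subseteq> V (k+1)" using Ik1 unfolding Inv_def by auto
    have s: "subspace (H k)" unfolding Hk by (rule f_pre_sub[OF True I1(1)])
    have sub: "H k \<subseteq> V k" unfolding Hk by blast
    have nz: "x k \<notin> H k \<and> (\<forall>v\<in>V k. \<exists>c. v - scale c (x k) \<in> H k)" if xk: "x k \<noteq> 0"
    proof
      have fx: "f k (x k) = x (k+1)" "x (k+1) \<noteq> 0" using X2[OF True \<open>k < n\<close> xk] by auto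
      have I2: "x (k+1) \<notin> H (k+1)" "\<forall>v\<in>V (k+1). \<exists>c. v - scale c (x (k+1)) \<in> H (k+1)"
        using Ik1 fx(2) unfolding Inv_def by auto
      show "x k \<notin> H k" unfolding Hk using fx I2 by simp
      show "\<forall>v\<in>V k. \<exists>c. v - scale c (x k) \<in> H k"
      proof
        fix v assume v: "v \<in> V k"
        obtain c where c: "f k v - scale c (x (k+1)) \<in> H (k+1)" using I2(2) fmap[OF True v] by blast
        have xkV: "x k \<in> V k" using X0 \<open>k < n\<close> by simp
        have "f k (v - scale c (x k)) = f k v - scale c (x (k+1))"
          using fdiff[OF True v Vscale[OF xkV]] fscale[OF True xkV] fx(1) by simp
        then have "v - scale c (x k) \<in> H k" unfolding Hk using c Vdiff[OF v Vscale[OF xkV]] by simp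
        then show "\<exists>c. v - scale c (x k) \<in> H k" by blast
      qed
    qed
    have z: "H k = V k" if xk: "x k = 0"
    proof -
      have "f k v \<in> H (k+1)" if v: "v \<in> V k" for v
      proof (cases "x (k+1) = 0")
        case True
        then have "H (k+1) = V (k+1)" using \<open>Inv (k+1)\<close> unfolding Inv_def by auto
        then show ?thesis using fmap[OF \<open>even k\<close> v] by simp
      next
        case False
        have "f k v \<in> R (k+1)" using BB[OF \<open>even k\<close> \<open>k < n\<close> xk False] v by blast
        moreover have "R (k+1) \<subseteq> H (k+1)" using \<open>Inv (k+1)\<close> False \<open>even k\<close> unfolding Inv_def by auto
        ultimately show ?thesis by blast
      qed
      then show ?thesis unfolding Hk by blast
    qed
    have r: "R k \<subseteq> H k" if xk: "x k \<noteq> 0" and xk1: "x (k-1) \<noteq> 0"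
    proof
      fix v assume v: "v \<in> R k"
      have "v \<in> V k" using R0[of k] \<open>k < n\<close> xk v by auto
      moreover have "f k v \<in> R (k+1)" using R1[OF \<open>even k\<close> \<open>k < n\<close> xk1] v by blast
      moreover have "x (k+1) \<noteq> 0" using X2[OF \<open>even k\<close> \<open>k < n\<close> xk] by simp
      then have "R (k+1) \<subseteq> H (k+1)" using \<open>Inv (k+1)\<close> \<open>even k\<close> unfolding Inv_def by auto
      ultimately show "v \<in> H k" unfolding Hk by blast
    qed
    show ?thesis unfolding Inv_def using s sub nz z r True \<open>k < n\<close> by auto
  next
    case False
    show ?thesis
    proof (cases "x k = 0")
      case True
      have Hk: "H k = V k" using Hstep[OF kn] True \<open>odd k\<close> by simp
      show ?thesis unfolding Inv_def using Hk True Vsub kn by auto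
    next
      case xk: False
      have Hk: "H k = (SOME Y. compl (x k) (ssum (g (k+1) ` H (k+1)) (R k)) Y (V k))"
        using Hstep[OF kn] xk \<open>odd k\<close> by simp
      have ev: "even (k+1)" using \<open>odd k\<close> by simp
      have I1: "subspace (H (k+1))" "H (k+1) \<subseteq> V (k+1)" using Ik1 unfolding Inv_def by auto
      have Rk: "subspace (R k)" "R k \<subseteq> V k" using R0[of k] \<open>k < n\<close> xk by auto
      have gx: "g (k+1) (x (k+1)) = x k" using X1[OF ev] \<open>k < n\<close> by simp
      have xk1: "x (k+1) \<noteq> 0" using gx xk ev by auto
      have I2: "x (k+1) \<notin> H (k+1)" "R (k+1) \<subseteq> H (k+1)"
        using Ik1 xk1 xk unfolding Inv_def by auto
      define W where "W = ssum (g (k+1) ` H (k+1)) (R k)"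
      have Ws: "subspace W" unfolding W_def
        by (rule subspace_ssum[OF g_image_sub[OF ev I1] Rk(1)])
      have gV: "g (k+1) ` H (k+1) \<subseteq> V k" using gmap[OF ev] I1(2) by fastforce
      have WV: "W \<subseteq> V k" unfolding W_def by (rule ssum_sub[OF gV Rk(2)])
      have xkV: "x k \<in> V k" using X0 \<open>k < n\<close> by simp
      have xk1V: "x (k+1) \<in> V (k+1)" using X0 \<open>k < n\<close> by simp
      have xW: "x k \<notin> W"
      proof
        assume "x k \<in> W"
        then obtain h r where hr: "h \<in> H (k+1)" "r \<in> R k" "x k = g (k+1) h + r"
          unfolding W_def ssum_def by blast
        have hV: "h \<in> V (k+1)" using hr(1) I1(2) by blast
        have "g (k+1) (x (k+1) - h) = r" using gdiff[OF ev xk1V hV] gx hr(3) by simp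
        then have "x (k+1) - h \<in> R (k+1)"
          using R2[OF ev _ _ Vdiff[OF xk1V hV]] \<open>k < n\<close> xk hr(2) by simp
        then have "x (k+1) - h \<in> H (k+1)" using I2(2) by blast
        then have "(x (k+1) - h) + h \<in> H (k+1)" using subspace_add[OF I1(1) _ hr(1)] by blast
        then show False using I2(1) by simp
      qed
      have c: "compl (x k) W (H k) (V k)" unfolding Hk W_def[symmetric]
        by (rule compl_some[OF Ws Vsub WV xkV xW])
      have "R k \<subseteq> W" "g (k+1) ` H (k+1) \<subseteq> W" unfolding W_def
        using ssum_right[OF subspace_0[OF g_image_sub[OF ev I1]]] ssum_left[OF subspace_0[OF Rk(1)]]
        by auto
      then show ?thesis using c xk \<open>odd k\<close> \<open>k < n\<close> unfolding Inv_def compl_def by auto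
    qed
  qed
  have allinv: "Inv (n - int d)" for d
  proof (induction d)
    case 0 then show ?case using base by simp
  next
    case (Suc d)
    have "Inv ((n - int (Suc d)) + 1)" using Suc by simp
    moreover have "n - int (Suc d) < n" by simp
    ultimately show ?case using stepinv by blast
  qed
  have inv: "Inv k" if "k \<le> n" for k
    using allinv[of "nat (n - k)"] that by simp
  have I_nz: "x k \<notin> H k" if "k \<le> n" "x k \<noteq> 0" for k
    using inv[OF that(1)] that(2) unfolding Inv_def by simp
  have I_dec: "\<exists>c. v - scale c (x k) \<in> H k" if "k \<le> n" "x k \<noteq> 0" "v \<in> V k" for k v
  proof -
    have "\<forall>v\<in>V k. \<exists>c. v - scale c (x k) \<in> H k" using inv[OF that(1)] that(2) unfolding Inv_def by simp
    then show ?thesis using that(3) by blast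
  qed
  have I_z: "H k = V k" if "k \<le> n" "x k = 0" for k
    using inv[OF that(1)] that(2) unfolding Inv_def by simp
  have I_g: "g (k+1) ` H (k+1) \<subseteq> H k" if "k < n" "odd k" "x k \<noteq> 0" for k
    using inv[of k] that unfolding Inv_def by simp
  define P where "P k = range (\<lambda>c. scale c (x k))" for k
  have Psub: "subspace (P k)" for k
    unfolding P_def span_singleton[symmetric] by (rule subspace_span)
  have PV: "P k \<subseteq> V k" if "k \<le> n" for k using Vscale X0[OF that] unfolding P_def by auto
  have HV: "subspace (H k) \<and> H k \<subseteq> V k" if "k \<le> n" for k using inv[OF that] unfolding Inv_def by auto
  have PQ: "P k \<inter> H k = {0}" if kn: "k \<le> n" for k
  proof
    show "P k \<inter> H k \<subseteq> {0}"
    proof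
      fix y assume y: "y \<in> P k \<inter> H k"
      then obtain c where c: "y = scale c (x k)" unfolding P_def by blast
      show "y \<in> {0}"
      proof (cases "x k = 0 \<or> c = 0")
        case True then show ?thesis using c by auto
      next
        case False
        have "scale (inverse c) y \<in> H k" using y subspace_scale HV[OF kn] by blast
        moreover have "scale (inverse c) y = x k" using c False by simp
        ultimately show ?thesis using I_nz[OF kn] False by auto
      qed
    qed
    have "0 \<in> P k" unfolding P_def by (rule range_eqI[of _ _ 0]) simp
    moreover have "0 \<in> H k" using HV[OF kn] subspace_0 by blast
    ultimately show "{0} \<subseteq> P k \<inter> H k" by simp
  qed
  have PH: "ssum (P k) (H k) = V k" if kn: "k \<le> n" for k
  proof
    have "H k \<subseteq> V k" using HV[OF kn] by simp
    then show "ssum (P k) (H k) \<subseteq> V k" by (rule ssum_sub[OF PV[OF kn]])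
    show "V k \<subseteq> ssum (P k) (H k)"
    proof
      fix v assume v: "v \<in> V k"
      show "v \<in> ssum (P k) (H k)"
      proof (cases "x k = 0")
        case True
        then have "H k = V k" using I_z[OF kn] by simp
        moreover have "0 \<in> P k" unfolding P_def True by auto
        ultimately have "0 + v \<in> ssum (P k) (H k)" unfolding ssum_def using v by blast
        then show ?thesis by simp
      next
        case False
        then obtain c where "v - scale c (x k) \<in> H k" using I_dec[OF kn _ v] by blast
        moreover have "scale c (x k) \<in> P k" unfolding P_def by auto
        ultimately have "scale c (x k) + (v - scale c (x k)) \<in> ssum (P k) (H k)" unfolding ssum_def by blast
        then show ?thesis by simp
      qed
    qed
  qed
  have gP: "g k ` P k \<subseteq> P (k-1)" if "even k" "k \<le> n" for k
  proof
    fix y assume "y \<in> g k ` P k"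
    then obtain c where "y = g k (scale c (x k))" unfolding P_def by blast
    then have "y = scale c (x (k-1))" using gscale[OF that(1) X0[OF that(2)]] X1[OF that] by simp
    then show "y \<in> P (k-1)" unfolding P_def by blast
  qed
  have fP: "f k ` P k \<subseteq> P (k+1)" if "even k" "k < n" for k
  proof
    fix y assume "y \<in> f k ` P k"
    then obtain c where y: "y = f k (scale c (x k))" unfolding P_def by blast
    show "y \<in> P (k+1)"
    proof (cases "x k = 0")
      case True
      then have "y = scale 0 (x (k+1))" using y that by simp
      then show ?thesis unfolding P_def by blast
    next
      case False
      then have "y = scale c (x (k+1))" using y fscale[OF that(1) X0] X2[OF that False] that by simp
      then show ?thesis unfolding P_def by blast
    qed
  qed
  have gH: "g k ` H k \<subseteq> H (k-1)" if "even k" "k \<le> n" for k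
  proof (cases "x (k-1) = 0")
    case True
    then have "H (k-1) = V (k-1)" using I_z[of "k-1"] that by simp
    have "H k \<subseteq> V k" using HV[OF that(2)] by simp
    then show ?thesis unfolding \<open>H (k-1) = V (k-1)\<close> using gmap[OF that(1)] by blast
  next
    case False
    have "odd (k-1)" using that by simp
    then have "g ((k-1)+1) ` H ((k-1)+1) \<subseteq> H (k-1)" using I_g[of "k-1"] that False by simp
    then show ?thesis by simp
  qed
  have fH: "f k ` H k \<subseteq> H (k+1)" if "even k" "k < n" for k
  proof -
    have "H k = {v \<in> V k. f k v \<in> H (k+1)}" using Hstep[OF that(2)] that(1) by simp
    then show ?thesis by blast
  qed
  have Pn: "P n = range (\<lambda>c. scale c (x n))" unfolding P_def ..
  have Cn: "C \<subseteq> H n" using inv[of n] unfolding Inv_def by simp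
  have A: "\<forall>k\<le>n. subspace (P k) \<and> P k \<subseteq> V k \<and> subspace (H k) \<and> H k \<subseteq> V k
                  \<and> P k \<inter> H k = {0} \<and> ssum (P k) (H k) = V k"
    using Psub PV HV PQ PH by simp
  have B: "\<forall>k. even k \<and> k \<le> n \<longrightarrow> g k ` P k \<subseteq> P (k-1) \<and> g k ` H k \<subseteq> H (k-1)"
    using gP gH by simp
  have D: "\<forall>k. even k \<and> k < n \<longrightarrow> f k ` P k \<subseteq> P (k+1) \<and> f k ` H k \<subseteq> H (k+1)"
    using fP fH by simp
  show ?thesis by (rule exI[of _ P], rule exI[of _ H]) (intro conjI; fact)
qed

end

context zz begin

definition thr :: "int \<Rightarrow> int \<Rightarrow> (int \<Rightarrow> 'v) \<Rightarrow> bool" where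
  "thr c k y \<longleftrightarrow> (\<forall>j. c \<le> j \<and> j \<le> k \<longrightarrow> y j \<in> V j)
     \<and> (\<forall>j. even j \<and> c < j \<and> j \<le> k \<longrightarrow> g j (y j) = y (j-1))
     \<and> (\<forall>j. even j \<and> c \<le> j \<and> j < k \<longrightarrow> f j (y j) = y (j+1))"

definition reach :: "int \<Rightarrow> int \<Rightarrow> 'v set" where
  "reach c k = {v. \<exists>y. thr c k y \<and> y k = v}"
definition dieR :: "int \<Rightarrow> int \<Rightarrow> 'v set" where
  "dieR c k = {v. \<exists>y. thr (min c k) k y \<and> y k = v \<and> y (min c k) = 0}"
definition Dinf :: "int \<Rightarrow> 'v set" where
  "Dinf k = {v. \<exists>c\<le>k. \<exists>y. thr c k y \<and> y k = v \<and> y c = 0}"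
definition Einf :: "int \<Rightarrow> 'v set" where
  "Einf k = {v. \<forall>c\<le>k. v \<in> reach c k}"

lemma thrD1: "thr c k y \<Longrightarrow> c \<le> j \<Longrightarrow> j \<le> k \<Longrightarrow> y j \<in> V j"
  unfolding thr_def by blast
lemma thrD2: "thr c k y \<Longrightarrow> even j \<Longrightarrow> c < j \<Longrightarrow> j \<le> k \<Longrightarrow> g j (y j) = y (j-1)"
  unfolding thr_def by blast
lemma thrD3: "thr c k y \<Longrightarrow> even j \<Longrightarrow> c \<le> j \<Longrightarrow> j < k \<Longrightarrow> f j (y j) = y (j+1)"
  unfolding thr_def by blast

lemma thr_add: "thr c k y \<Longrightarrow> thr c k z \<Longrightarrow> thr c k (\<lambda>j. y j + z j)"
  unfolding thr_def using fadd gadd Vadd by auto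
lemma thr_scale: "thr c k y \<Longrightarrow> thr c k (\<lambda>j. scale a (y j))"
  unfolding thr_def using fscale gscale Vscale by auto
lemma thr_zero: "thr c k (\<lambda>j. 0)"
  unfolding thr_def by auto
lemma thr_mono: "thr c k y \<Longrightarrow> c \<le> c' \<Longrightarrow> k' \<le> k \<Longrightarrow> thr c' k' y"
  unfolding thr_def by auto
lemma thr_single: "w \<in> V k \<Longrightarrow> thr k k (\<lambda>j. w)"
  unfolding thr_def by auto

lemma thr_up:
  assumes "thr c k y" "even k" "c \<le> k"
  shows "thr c (k+1) (y(k+1 := f k (y k)))"
  using assms fmap unfolding thr_def by auto

lemma thr_down:
  assumes "thr c (k-1) y" "even k" "c \<le> k - 1" "v \<in> V k" "g k v = y (k-1)"
  shows "thr c k (y(k := v))"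
proof -
  have a: "\<forall>j. c \<le> j \<and> j \<le> k \<longrightarrow> (y(k := v)) j \<in> V j"
  proof (intro allI impI)
    fix j assume "c \<le> j \<and> j \<le> k"
    then show "(y(k := v)) j \<in> V j" using assms(1,4) unfolding thr_def by (cases "j = k") auto
  qed
  have b: "\<forall>j. even j \<and> c < j \<and> j \<le> k \<longrightarrow> g j ((y(k := v)) j) = (y(k := v)) (j-1)"
  proof (intro allI impI)
    fix j assume j: "even j \<and> c < j \<and> j \<le> k"
    show "g j ((y(k := v)) j) = (y(k := v)) (j-1)"
    proof (cases "j = k")
      case True then show ?thesis using assms(5) by simp
    next
      case False
      then have "j \<le> k - 1" using j by simp
      moreover have "j - 1 \<noteq> k" using j by simp
      ultimately show ?thesis using assms(1) j False unfolding thr_def by simp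
    qed
  qed
  have c: "\<forall>j. even j \<and> c \<le> j \<and> j < k \<longrightarrow> f j ((y(k := v)) j) = (y(k := v)) (j+1)"
  proof (intro allI impI)
    fix j assume j: "even j \<and> c \<le> j \<and> j < k"
    then have "j + 1 \<noteq> k" using assms(2) by (metis even_add odd_one)
    then have "j < k - 1" using j by simp
    then show "f j ((y(k := v)) j) = (y(k := v)) (j+1)" using assms(1) j \<open>j + 1 \<noteq> k\<close> unfolding thr_def by simp
  qed
  show ?thesis unfolding thr_def using a b c by blast
qed

lemma thr_zeroing:
  assumes "thr c k z" "c \<le> j" "j \<le> k" "z j = 0"
  shows "thr c' k (\<lambda>l. if l < j then 0 else z l)"
proof -
  have a: "\<forall>l. c' \<le> l \<and> l \<le> k \<longrightarrow> (if l < j then 0 else z l) \<in> V l"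
    using assms(1,2) unfolding thr_def by auto
  have b: "\<forall>l. even l \<and> c' < l \<and> l \<le> k \<longrightarrow> g l (if l < j then 0 else z l) = (if l - 1 < j then 0 else z (l-1))"
  proof (intro allI impI)
    fix l assume l: "even l \<and> c' < l \<and> l \<le> k"
    consider "l < j" | "l = j" | "l > j" by linarith
    then show "g l (if l < j then 0 else z l) = (if l - 1 < j then 0 else z (l-1))"
    proof cases
      case 1 then show ?thesis using l by simp
    next
      case 2 then show ?thesis using l assms(4) by simp
    next
      case 3 then show ?thesis using l assms(1,2) unfolding thr_def by auto
    qed
  qed
  have c: "\<forall>l. even l \<and> c' \<le> l \<and> l < k \<longrightarrow> f l (if l < j then 0 else z l) = (if l + 1 < j then 0 else z (l+1))"
  proof (intro allI impI)
    fix l assume l: "even l \<and> c' \<le> l \<and> l < k"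
    consider "l + 1 < j" | "l + 1 = j" | "l \<ge> j" by linarith
    then show "f l (if l < j then 0 else z l) = (if l + 1 < j then 0 else z (l+1))"
    proof cases
      case 1 then show ?thesis using l by simp
    next
      case 2 then show ?thesis using l assms(4) by simp
    next
      case 3 then show ?thesis using l assms(1,2) unfolding thr_def by auto
    qed
  qed
  show ?thesis unfolding thr_def using a b c by simp
qed

lemma reach_sub: "subspace (reach c k)"
  unfolding subspace_def reach_def
proof (intro conjI ballI allI)
  show "0 \<in> {v. \<exists>y. thr c k y \<and> y k = v}" using thr_zero by blast
next
  fix a b assume "a \<in> {v. \<exists>y. thr c k y \<and> y k = v}" "b \<in> {v. \<exists>y. thr c k y \<and> y k = v}"
  then obtain y z where "thr c k y" "y k = a" "thr c k z" "z k = b" by blast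
  then show "a + b \<in> {v. \<exists>y. thr c k y \<and> y k = v}" using thr_add by fastforce
next
  fix r a assume "a \<in> {v. \<exists>y. thr c k y \<and> y k = v}"
  then obtain y where "thr c k y" "y k = a" by blast
  then show "scale r a \<in> {v. \<exists>y. thr c k y \<and> y k = v}" using thr_scale by fastforce
qed

lemma reach_V: "c \<le> k \<Longrightarrow> reach c k \<subseteq> V k"
  unfolding reach_def using thrD1 by blast

lemma dieR_sub: "subspace (dieR c k)"
  unfolding subspace_def dieR_def
proof (intro conjI ballI allI)
  show "0 \<in> {v. \<exists>y. thr (min c k) k y \<and> y k = v \<and> y (min c k) = 0}" using thr_zero by blast
next
  fix a b assume "a \<in> {v. \<exists>y. thr (min c k) k y \<and> y k = v \<and> y (min c k) = 0}"
    "b \<in> {v. \<exists>y. thr (min c k) k y \<and> y k = v \<and> y (min c k) = 0}"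
  then obtain y z where "thr (min c k) k y" "y k = a" "y (min c k) = 0" "thr (min c k) k z" "z k = b" "z (min c k) = 0" by blast
  then show "a + b \<in> {v. \<exists>y. thr (min c k) k y \<and> y k = v \<and> y (min c k) = 0}"
    using thr_add[of "min c k" k y z] by (intro CollectI exI[of _ "\<lambda>j. y j + z j"]) auto
next
  fix r a assume "a \<in> {v. \<exists>y. thr (min c k) k y \<and> y k = v \<and> y (min c k) = 0}"
  then obtain y where "thr (min c k) k y" "y k = a" "y (min c k) = 0" by blast
  then show "scale r a \<in> {v. \<exists>y. thr (min c k) k y \<and> y k = v \<and> y (min c k) = 0}"
    using thr_scale[of "min c k" k y r] by (intro CollectI exI[of _ "\<lambda>j. scale r (y j)"]) auto
qed

lemma dieR_V: "dieR c k \<subseteq> V k"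
  unfolding dieR_def using thrD1 by fastforce

lemma Dinf_pad:
  assumes "thr c k y" "y c = 0" "c' \<le> c" "c \<le> k"
  shows "thr c' k (\<lambda>l. if l < c then 0 else y l) \<and> (\<lambda>l. if l < c then 0 else y l) c' = 0 \<and> (\<lambda>l. if l < c then 0 else y l) k = y k"
  using thr_zeroing[OF assms(1) order_refl assms(4) assms(2)] assms by auto

lemma Dinf_sub: "subspace (Dinf k)"
  unfolding subspace_def
proof (intro conjI ballI allI)
  show "0 \<in> Dinf k" unfolding Dinf_def using thr_zero by blast
next
  fix a b assume "a \<in> Dinf k" "b \<in> Dinf k"
  then obtain c y c2 z where y: "c \<le> k" "thr c k y" "y k = a" "y c = 0"
    and z: "c2 \<le> k" "thr c2 k z" "z k = b" "z c2 = 0" unfolding Dinf_def by blast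
  define m where "m = min c c2"
  obtain y' where y': "thr m k y'" "y' m = 0" "y' k = a"
    using Dinf_pad[OF y(2) y(4), of m] y m_def by auto
  obtain z' where z': "thr m k z'" "z' m = 0" "z' k = b"
    using Dinf_pad[OF z(2) z(4), of m] z m_def by auto
  have "m \<le> k" using y m_def by simp
  then show "a + b \<in> Dinf k" unfolding Dinf_def
    using thr_add[OF y'(1) z'(1)] y' z' by (intro CollectI exI[of _ m] conjI exI[of _ "\<lambda>j. y' j + z' j"]) auto
next
  fix r a assume "a \<in> Dinf k"
  then obtain c y where y: "c \<le> k" "thr c k y" "y k = a" "y c = 0" unfolding Dinf_def by blast
  then show "scale r a \<in> Dinf k" unfolding Dinf_def
    using thr_scale[OF y(2), of r] by (intro CollectI exI[of _ c] conjI exI[of _ "\<lambda>j. scale r (y j)"]) auto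
qed

lemma Dinf_V: "Dinf k \<subseteq> V k"
  unfolding Dinf_def using thrD1 by fastforce

end

context zz begin

lemma reach_up: "even k \<Longrightarrow> c \<le> k \<Longrightarrow> v \<in> reach c k \<Longrightarrow> f k v \<in> reach c (k+1)"
  unfolding reach_def using thr_up by fastforce

lemma reach_down: "even k \<Longrightarrow> c \<le> k - 1 \<Longrightarrow> v \<in> V k \<Longrightarrow> g k v \<in> reach c (k-1) \<Longrightarrow> v \<in> reach c k"
  unfolding reach_def using thr_down by fastforce

lemma dieR_up:
  assumes "even k" "c \<le> k" "v \<in> dieR c k" shows "f k v \<in> dieR c (k+1)"
proof -
  obtain y where y: "thr c k y" "y k = v" "y c = 0" using assms unfolding dieR_def by (auto simp: min_def)
  have "thr c (k+1) (y(k+1 := f k (y k)))" by (rule thr_up[OF y(1) assms(1,2)])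
  moreover have "c \<noteq> k + 1" using assms(2) by simp
  ultimately show ?thesis unfolding dieR_def using y assms(2) by (intro CollectI exI[of _ "y(k+1 := f k (y k))"]) (auto simp: min_def)
qed

lemma dieR_down:
  assumes "even k" "c \<le> k - 1" "v \<in> V k" "g k v \<in> dieR c (k-1)" shows "v \<in> dieR c k"
proof -
  obtain y where y: "thr c (k-1) y" "y (k-1) = g k v" "y c = 0" using assms unfolding dieR_def by (auto simp: min_def)
  have "thr c k (y(k := v))" by (rule thr_down[OF y(1) assms(1,2,3) y(2)[symmetric]])
  moreover have "c \<noteq> k" using assms(2) by simp
  ultimately show ?thesis unfolding dieR_def using y assms(2) by (intro CollectI exI[of _ "y(k := v)"]) (auto simp: min_def)
qed

lemma Dinf_up:
  assumes "even k" "v \<in> Dinf k" shows "f k v \<in> Dinf (k+1)"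
proof -
  obtain c y where y: "c \<le> k" "thr c k y" "y k = v" "y c = 0" using assms unfolding Dinf_def by blast
  have "thr c (k+1) (y(k+1 := f k (y k)))" by (rule thr_up[OF y(2) assms(1) y(1)])
  moreover have "c \<noteq> k + 1" using y(1) by simp
  ultimately show ?thesis unfolding Dinf_def using y by (intro CollectI exI[of _ c] conjI exI[of _ "y(k+1 := f k (y k))"]) auto
qed

lemma Dinf_down:
  assumes "even k" "v \<in> V k" "g k v \<in> Dinf (k-1)" shows "v \<in> Dinf k"
proof -
  obtain c y where y: "c \<le> k - 1" "thr c (k-1) y" "y (k-1) = g k v" "y c = 0" using assms unfolding Dinf_def by blast
  have "thr c k (y(k := v))" by (rule thr_down[OF y(2) assms(1) y(1) assms(2) y(3)[symmetric]])
  moreover have "c \<noteq> k" using y(1) by simp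
  ultimately show ?thesis unfolding Dinf_def using y by (intro CollectI exI[of _ c] conjI exI[of _ "y(k := v)"]) auto
qed

definition splits :: "int \<Rightarrow> 'v set \<Rightarrow> 'v set \<Rightarrow> bool" where
  "splits n A C \<longleftrightarrow> (\<exists>P Q. (\<forall>k\<le>n. subspace (P k) \<and> P k \<subseteq> V k \<and> subspace (Q k) \<and> Q k \<subseteq> V k
                  \<and> P k \<inter> Q k = {0} \<and> ssum (P k) (Q k) = V k)
            \<and> (\<forall>k. even k \<and> k \<le> n \<longrightarrow> g k ` P k \<subseteq> P (k-1) \<and> g k ` Q k \<subseteq> Q (k-1))
            \<and> (\<forall>k. even k \<and> k < n \<longrightarrow> f k ` P k \<subseteq> P (k+1) \<and> f k ` Q k \<subseteq> Q (k+1))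
            \<and> P n \<subseteq> A \<and> P n \<noteq> {0} \<and> C \<subseteq> Q n)"

lemma GL_splits:
  fixes n :: int and x :: "int \<Rightarrow> 'v" and R :: "int \<Rightarrow> 'v set" and C :: "'v set"
  assumes X0: "\<And>k. k \<le> n \<Longrightarrow> x k \<in> V k"
    and X1: "\<And>k. even k \<Longrightarrow> k \<le> n \<Longrightarrow> g k (x k) = x (k-1)"
    and X2: "\<And>k. even k \<Longrightarrow> k < n \<Longrightarrow> x k \<noteq> 0 \<Longrightarrow> f k (x k) = x (k+1) \<and> x (k+1) \<noteq> 0"
    and X4: "x n \<noteq> 0" "x n \<notin> ssum (R n) C"
    and CC: "subspace C" "C \<subseteq> V n"
    and R0: "\<And>k. k \<le> n \<Longrightarrow> x k \<noteq> 0 \<Longrightarrow> subspace (R k) \<and> R k \<subseteq> V k"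
    and R1: "\<And>k. even k \<Longrightarrow> k < n \<Longrightarrow> x (k-1) \<noteq> 0 \<Longrightarrow> f k ` R k \<subseteq> R (k+1)"
    and R2: "\<And>k v. even k \<Longrightarrow> k \<le> n \<Longrightarrow> x (k-1) \<noteq> 0 \<Longrightarrow> v \<in> V k \<Longrightarrow> g k v \<in> R (k-1) \<Longrightarrow> v \<in> R k"
    and BB: "\<And>k. even k \<Longrightarrow> k < n \<Longrightarrow> x k = 0 \<Longrightarrow> x (k+1) \<noteq> 0 \<Longrightarrow> f k ` V k \<subseteq> R (k+1)"
    and AA: "subspace A" "x n \<in> A"
  shows "splits n A C"
proof -
  have ex: "\<exists>P Q. (\<forall>k\<le>n. subspace (P k) \<and> P k \<subseteq> V k \<and> subspace (Q k) \<and> Q k \<subseteq> V k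
                  \<and> P k \<inter> Q k = {0} \<and> ssum (P k) (Q k) = V k)
            \<and> (\<forall>k. even k \<and> k \<le> n \<longrightarrow> g k ` P k \<subseteq> P (k-1) \<and> g k ` Q k \<subseteq> Q (k-1))
            \<and> (\<forall>k. even k \<and> k < n \<longrightarrow> f k ` P k \<subseteq> P (k+1) \<and> f k ` Q k \<subseteq> Q (k+1))
            \<and> P n = range (\<lambda>c. scale c (x n)) \<and> C \<subseteq> Q n"
    by (rule GL[OF X0 X1 X2 X4 CC R0 R1 R2 BB])
  then obtain P where "\<exists>Q. (\<forall>k\<le>n. subspace (P k) \<and> P k \<subseteq> V k \<and> subspace (Q k) \<and> Q k \<subseteq> V k
                  \<and> P k \<inter> Q k = {0} \<and> ssum (P k) (Q k) = V k)
            \<and> (\<forall>k. even k \<and> k \<le> n \<longrightarrow> g k ` P k \<subseteq> P (k-1) \<and> g k ` Q k \<subseteq> Q (k-1))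
            \<and> (\<forall>k. even k \<and> k < n \<longrightarrow> f k ` P k \<subseteq> P (k+1) \<and> f k ` Q k \<subseteq> Q (k+1))
            \<and> P n = range (\<lambda>c. scale c (x n)) \<and> C \<subseteq> Q n" ..
  then obtain Q where PQ: "(\<forall>k\<le>n. subspace (P k) \<and> P k \<subseteq> V k \<and> subspace (Q k) \<and> Q k \<subseteq> V k
                  \<and> P k \<inter> Q k = {0} \<and> ssum (P k) (Q k) = V k)
            \<and> (\<forall>k. even k \<and> k \<le> n \<longrightarrow> g k ` P k \<subseteq> P (k-1) \<and> g k ` Q k \<subseteq> Q (k-1))
            \<and> (\<forall>k. even k \<and> k < n \<longrightarrow> f k ` P k \<subseteq> P (k+1) \<and> f k ` Q k \<subseteq> Q (k+1))
            \<and> P n = range (\<lambda>c. scale c (x n)) \<and> C \<subseteq> Q n" ..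
  note P1 = conjunct1[OF PQ]
  note P2 = conjunct1[OF conjunct2[OF PQ]]
  note P3 = conjunct1[OF conjunct2[OF conjunct2[OF PQ]]]
  note P4 = conjunct1[OF conjunct2[OF conjunct2[OF conjunct2[OF PQ]]]]
  note P5 = conjunct2[OF conjunct2[OF conjunct2[OF conjunct2[OF PQ]]]]
  have P6: "P n \<subseteq> A" unfolding P4 using subspace_scale[OF AA(1) AA(2)] by blast
  have "x n \<in> P n" unfolding P4 by (rule range_eqI[of _ _ 1]) simp
  then have P7: "P n \<noteq> {0}" using X4(1) by blast
  show ?thesis unfolding splits_def
    by (rule exI[of _ P], rule exI[of _ Q]) (intro conjI; fact)
qed

lemma caseO:
  assumes a: "odd a" "a \<le> n" and x0: "x0 \<in> reach a n" "x0 \<in> A" "x0 \<notin> ssum (reach (a-1) n) C" "x0 \<noteq> 0"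
    and AA: "subspace A" and CC: "subspace C" "C \<subseteq> V n"
  shows "splits n A C"
proof -
  obtain z where z: "thr a n z" "z n = x0" using x0(1) unfolding reach_def by blast
  have nv: "z j \<noteq> 0" if "a \<le> j" "j \<le> n" for j
  proof
    assume "z j = 0"
    have "thr (a-1) n (\<lambda>l. if l < j then 0 else z l)" by (rule thr_zeroing[OF z(1) that \<open>z j = 0\<close>])
    moreover have "(\<lambda>l. if l < j then 0 else z l) n = x0" using z(2) that(2) by simp
    ultimately have "x0 \<in> reach (a-1) n" unfolding reach_def by blast
    moreover have "x0 = x0 + 0" by simp
    ultimately have "x0 \<in> ssum (reach (a-1) n) C" unfolding ssum_def using subspace_0[OF CC(1)] by blast
    then show False using x0(3) by simp
  qed
  define x where "x k = (if a \<le> k then z k else 0)" for k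
  define R where "R k = reach (a-1) k" for k
  show ?thesis
  proof (rule GL_splits[of n x R C])
    show "x k \<in> V k" if "k \<le> n" for k using thrD1[OF z(1) _ that] unfolding x_def by auto
    show "g k (x k) = x (k-1)" if "even k" "k \<le> n" for k
    proof (cases "a \<le> k")
      case True
      moreover have "a \<noteq> k" using a(1) that(1) by auto
      ultimately have "a < k" by simp
      then show ?thesis unfolding x_def using thrD2[OF z(1) that(1) _ that(2)] by simp
    next
      case False then show ?thesis unfolding x_def using that by simp
    qed
    show "f k (x k) = x (k+1) \<and> x (k+1) \<noteq> 0" if "even k" "k < n" "x k \<noteq> 0" for k
    proof -
      have "a \<le> k" using that(3) unfolding x_def by (auto split: if_splits)
      then show ?thesis unfolding x_def using thrD3[OF z(1) that(1) _ that(2)] nv[of "k+1"] that(2) by simp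
    qed
    have xn: "x n = x0" unfolding x_def using a z(2) by simp
    show "x n \<noteq> 0" "x n \<notin> ssum (R n) C" unfolding xn R_def using x0 by simp_all
    show "subspace C" "C \<subseteq> V n" using CC by auto
    show "subspace (R k) \<and> R k \<subseteq> V k" if "k \<le> n" "x k \<noteq> 0" for k
    proof -
      have "a \<le> k" using that(2) unfolding x_def by (auto split: if_splits)
      then show ?thesis unfolding R_def using reach_sub reach_V[of "a-1" k] by simp
    qed
    show "f k ` R k \<subseteq> R (k+1)" if "even k" "k < n" "x (k-1) \<noteq> 0" for k
    proof -
      have "a \<le> k - 1" using that(3) unfolding x_def by (auto split: if_splits)
      then show ?thesis unfolding R_def using reach_up[OF that(1), of "a-1"] by auto
    qed
    show "v \<in> R k" if "even k" "k \<le> n" "x (k-1) \<noteq> 0" "v \<in> V k" "g k v \<in> R (k-1)" for k v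
    proof -
      have "a \<le> k - 1" using that(3) unfolding x_def by (auto split: if_splits)
      then show ?thesis unfolding R_def using reach_down[OF that(1) _ that(4)] that(5) unfolding R_def by auto
    qed
    show "f k ` V k \<subseteq> R (k+1)" if "even k" "k < n" "x k = 0" "x (k+1) \<noteq> 0" for k
    proof -
      have "\<not> a \<le> k" using that(2,3) nv[of k] unfolding x_def by auto
      moreover have "a \<le> k + 1" using that(4) unfolding x_def by (auto split: if_splits)
      ultimately have ak: "a - 1 = k" by simp
      show ?thesis
      proof
        fix u assume "u \<in> f k ` V k"
        then obtain w where w: "w \<in> V k" "u = f k w" by blast
        have "w \<in> reach k k" unfolding reach_def using thr_single[OF w(1)] by blast
        then have "f k w \<in> reach k (k+1)" by (rule reach_up[OF that(1) order_refl])
        then show "u \<in> R (k+1)" unfolding R_def ak w(2) .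
      qed
    qed
    show "subspace A" "x n \<in> A" unfolding xn using AA x0 by simp_all
  qed
qed

end

context zz begin

lemma caseE:
  assumes c0: "odd c0" "c0 < n" and x0: "x0 \<in> dieR c0 n" "x0 \<in> A" "x0 \<notin> ssum (dieR (c0+2) n) C" "x0 \<noteq> 0"
    and AA: "subspace A" and CC: "subspace C" "C \<subseteq> V n"
  shows "splits n A C"
proof -
  have mc: "min c0 n = c0" using c0 by simp
  obtain z where z: "thr c0 n z" "z n = x0" "z c0 = 0" using x0(1) unfolding dieR_def mc by blast
  have notin: "x0 \<notin> dieR (c0+2) n"
  proof
    assume "x0 \<in> dieR (c0+2) n"
    moreover have "x0 = x0 + 0" by simp
    ultimately have "x0 \<in> ssum (dieR (c0+2) n) C" unfolding ssum_def using subspace_0[OF CC(1)] by blast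
    then show False using x0(3) by simp
  qed
  have nv2: "z j \<noteq> 0" if "c0 + 2 \<le> j" "j \<le> n" for j
  proof
    assume zj: "z j = 0"
    have t: "thr (c0+2) n (\<lambda>l. if l < j then 0 else z l)"
      by (rule thr_zeroing[OF z(1) _ that(2) zj]) (use that in simp)
    have m2: "min (c0+2) n = c0 + 2" using that by simp
    have "(\<lambda>l. if l < j then 0 else z l) (c0+2) = 0" using zj that(1) by simp
    moreover have "(\<lambda>l. if l < j then 0 else z l) n = x0" using z(2) that(2) by simp
    ultimately have "x0 \<in> dieR (c0+2) n" unfolding dieR_def m2 using t by blast
    then show False using notin by simp
  qed
  have nv: "z j \<noteq> 0" if "c0 < j" "j \<le> n" for j
  proof (cases "c0 + 2 \<le> j")
    case True then show ?thesis using nv2 that by simp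
  next
    case False
    then have j: "j = c0 + 1" using that by simp
    show ?thesis
    proof (cases "j = n")
      case True then show ?thesis using z(2) x0(4) by simp
    next
      case False
      then have jn: "j < n" using that by simp
      have ev: "even j" using j c0(1) by simp
      have "f j (z j) = z (j+1)" by (rule thrD3[OF z(1) ev _ jn]) (use j in simp)
      moreover have "z (j+1) \<noteq> 0" using nv2[of "j+1"] j jn by simp
      ultimately show ?thesis using ev by auto
    qed
  qed
  define x where "x k = (if c0 < k then z k else 0)" for k
  define R where "R k = dieR (c0+2) k" for k
  have xn: "x n = x0" unfolding x_def using c0 z(2) by simp
  have xsupp: "c0 < k" if "x k \<noteq> 0" for k using that unfolding x_def by (auto split: if_splits)
  show ?thesis
  proof (rule GL_splits[of n x R C])
    show "x k \<in> V k" if "k \<le> n" for k using thrD1[OF z(1) _ that] unfolding x_def by auto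
    show "g k (x k) = x (k-1)" if "even k" "k \<le> n" for k
    proof (cases "c0 < k")
      case True
      have g: "g k (z k) = z (k-1)" by (rule thrD2[OF z(1) that(1) True that(2)])
      show ?thesis
      proof (cases "c0 < k - 1")
        case True then show ?thesis unfolding x_def using g \<open>c0 < k\<close> by simp
      next
        case False
        then have "k - 1 = c0" using \<open>c0 < k\<close> by simp
        then show ?thesis unfolding x_def using g \<open>c0 < k\<close> z(3) by simp
      qed
    next
      case False then show ?thesis unfolding x_def using that by simp
    qed
    show "f k (x k) = x (k+1) \<and> x (k+1) \<noteq> 0" if "even k" "k < n" "x k \<noteq> 0" for k
    proof -
      have "c0 < k" using xsupp that(3) by simp
      then show ?thesis unfolding x_def using thrD3[OF z(1) that(1) _ that(2)] nv[of "k+1"] that(2) by simp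
    qed
    show "x n \<noteq> 0" "x n \<notin> ssum (R n) C" unfolding xn R_def using x0 by simp_all
    show "subspace C" "C \<subseteq> V n" using CC by auto
    show "subspace (R k) \<and> R k \<subseteq> V k" if "k \<le> n" "x k \<noteq> 0" for k
      unfolding R_def using dieR_sub dieR_V by simp
    show "f k ` R k \<subseteq> R (k+1)" if "even k" "k < n" "x (k-1) \<noteq> 0" for k
    proof -
      have "c0 < k - 1" using xsupp that(3) by simp
      moreover have "odd (k - 1)" using that(1) by simp
      ultimately have "c0 + 2 \<le> k - 1" using c0(1) by presburger
      then show ?thesis unfolding R_def using dieR_up[OF that(1), of "c0+2"] by auto
    qed
    show "v \<in> R k" if "even k" "k \<le> n" "x (k-1) \<noteq> 0" "v \<in> V k" "g k v \<in> R (k-1)" for k v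
    proof -
      have "c0 < k - 1" using xsupp that(3) by simp
      moreover have "odd (k - 1)" using that(1) by simp
      ultimately have "c0 + 2 \<le> k - 1" using c0(1) by presburger
      then show ?thesis unfolding R_def using dieR_down[OF that(1) _ that(4)] that(5) unfolding R_def by auto
    qed
    show "f k ` V k \<subseteq> R (k+1)" if "even k" "k < n" "x k = 0" "x (k+1) \<noteq> 0" for k
    proof -
      have "c0 < k + 1" using xsupp[OF that(4)] by simp
      moreover have "\<not> c0 < k" using that(2,3) nv[of k] unfolding x_def by auto
      ultimately have "c0 = k" by simp
      then show ?thesis using c0(1) that(1) by simp
    qed
    show "subspace A" "x n \<in> A" unfolding xn using AA x0 by simp_all
  qed
qed

end

context zz begin

lemma reach_stab: "\<exists>c1\<le>k. \<forall>c\<le>c1. reach c k = reach c1 k"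
proof -
  from Vfin[of k] obtain B where B0: "finite B \<and> span B = V k" ..
  note B = conjunct1[OF B0] conjunct2[OF B0]
  define S where "S m = reach (k - int m) k" for m
  have "\<exists>m0. \<forall>m\<ge>m0. S m = S m0"
  proof (rule chain_stab[of S B])
    show "subspace (S m)" for m unfolding S_def by (rule reach_sub)
    show "S (Suc m) \<subseteq> S m" for m
    proof
      fix v assume "v \<in> S (Suc m)"
      then obtain y where y: "thr (k - int (Suc m)) k y" "y k = v" unfolding S_def reach_def by blast
      have "thr (k - int m) k y" by (rule thr_mono[OF y(1)]) simp_all
      then show "v \<in> S m" unfolding S_def reach_def using y(2) by blast
    qed
    show "finite B" by (rule B(1))
    show "S 0 \<subseteq> span B" unfolding S_def B(2) using reach_V[of k k] by simp
  qed
  then obtain m0 where m0: "\<forall>m\<ge>m0. S m = S m0" ..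
  show ?thesis
  proof (intro exI[of _ "k - int m0"] conjI allI impI)
    show "k - int m0 \<le> k" by simp
    fix c assume "c \<le> k - int m0"
    then have "m0 \<le> nat (k - c)" by simp
    then have "S (nat (k - c)) = S m0" using m0 by blast
    moreover have "k - int (nat (k - c)) = c" using \<open>c \<le> k - int m0\<close> by simp
    ultimately show "reach c k = reach (k - int m0) k" unfolding S_def by simp
  qed
qed

lemma Einf_eq: "\<exists>c1\<le>k. Einf k = reach c1 k"
proof -
  from reach_stab[of k] obtain c1 where c10: "c1 \<le> k \<and> (\<forall>c\<le>c1. reach c k = reach c1 k)" ..
  note c1 = conjunct1[OF c10] conjunct2[OF c10]
  have "Einf k = reach c1 k"
  proof
    show "Einf k \<subseteq> reach c1 k"
    proof
      fix v assume "v \<in> Einf k"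
      then have "\<forall>c\<le>k. v \<in> reach c k" unfolding Einf_def by simp
      then show "v \<in> reach c1 k" using c1(1) by simp
    qed
    show "reach c1 k \<subseteq> Einf k"
    proof
      fix v assume v: "v \<in> reach c1 k"
      have "v \<in> reach c k" if "c \<le> k" for c
      proof (cases "c \<le> c1")
        case True
        have "reach c k = reach c1 k" using c1(2) True by blast
        then show ?thesis using v by simp
      next
        case False
        obtain y where y: "thr c1 k y" "y k = v" using v unfolding reach_def by blast
        have "thr c k y" by (rule thr_mono[OF y(1)]) (use False in simp_all)
        then show ?thesis unfolding reach_def using y(2) by blast
      qed
      then show "v \<in> Einf k" unfolding Einf_def by blast
    qed
  qed
  then show ?thesis using c1(1) by (intro exI[of _ c1]) simp
qed

lemma Einf_V: "Einf k \<subseteq> V k"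
  unfolding Einf_def using reach_V[of k k] by blast

lemma Einf_even: assumes "even k" "v \<in> Einf k" shows "g k v \<in> Einf (k-1)"
  unfolding Einf_def
proof (intro CollectI allI impI)
  fix c assume c: "c \<le> k - 1"
  then have "v \<in> reach c k" using assms(2) unfolding Einf_def by simp
  then obtain y where y: "thr c k y" "y k = v" unfolding reach_def by blast
  have "g k (y k) = y (k-1)" by (rule thrD2[OF y(1) assms(1)]) (use c in simp_all)
  moreover have "thr c (k-1) y" by (rule thr_mono[OF y(1)]) simp_all
  ultimately show "g k v \<in> reach c (k-1)" unfolding reach_def using y(2) by auto
qed

lemma Einf_odd: assumes "odd k" "v \<in> Einf k" shows "\<exists>w. w \<in> Einf (k-1) \<and> f (k-1) w = v"
proof -
  from Einf_eq[of "k-1"] obtain c1 where c10: "c1 \<le> k - 1 \<and> Einf (k-1) = reach c1 (k-1)" ..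
  note c1 = conjunct1[OF c10] conjunct2[OF c10]
  have "v \<in> reach c1 k" using assms(2) c1(1) unfolding Einf_def by simp
  then obtain y where y: "thr c1 k y" "y k = v" unfolding reach_def by blast
  have ev: "even (k-1)" using assms(1) by simp
  have "f (k-1) (y (k-1)) = y (k-1+1)" by (rule thrD3[OF y(1) ev c1(1)]) simp
  moreover have "thr c1 (k-1) y" by (rule thr_mono[OF y(1)]) simp_all
  then have "y (k-1) \<in> Einf (k-1)" unfolding c1(2) reach_def by blast
  ultimately show ?thesis using y(2) by auto
qed

lemma inf_thread:
  assumes x0: "x0 \<in> Einf n"
  shows "\<exists>z. z n = x0 \<and> (\<forall>k\<le>n. z k \<in> V k) \<and> (\<forall>k. even k \<and> k \<le> n \<longrightarrow> g k (z k) = z (k-1))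
            \<and> (\<forall>k. even k \<and> k < n \<longrightarrow> f k (z k) = z (k+1))"
proof -
  define step where "step = (\<lambda>(d::nat) zd. let k = n - int d in
      if even k then g k zd else (SOME w. w \<in> Einf (k-1) \<and> f (k-1) w = zd))"
  define zr where "zr = rec_nat x0 step"
  define z where "z k = zr (nat (n - k))" for k
  have zn: "z n = x0" unfolding z_def zr_def by simp
  have zstep: "z (k-1) = (if even k then g k (z k) else (SOME w. w \<in> Einf (k-1) \<and> f (k-1) w = z k))"
    if "k \<le> n" for k
  proof -
    have e: "nat (n - (k-1)) = Suc (nat (n - k))" using that by simp
    have e2: "n - int (nat (n - k)) = k" using that by simp
    have 1: "z (k-1) = step (nat (n - k)) (z k)" unfolding z_def zr_def e by simp
    show ?thesis unfolding 1 step_def Let_def by (simp only: e2)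
  qed
  have inv: "z (n - int d) \<in> Einf (n - int d)" for d
  proof (induction d)
    case 0 then show ?case using zn x0 by simp
  next
    case (Suc d)
    define k where "k = n - int d"
    have kn: "k \<le> n" unfolding k_def by simp
    have ih: "z k \<in> Einf k" using Suc unfolding k_def .
    have e: "n - int (Suc d) = k - 1" unfolding k_def by simp
    show ?case unfolding e
    proof (cases "even k")
      case True
      then show "z (k-1) \<in> Einf (k-1)" using zstep[OF kn] Einf_even[OF True ih] by simp
    next
      case False
      have ex: "\<exists>w. w \<in> Einf (k-1) \<and> f (k-1) w = z k" by (rule Einf_odd[OF False ih])
      have "z (k-1) = (SOME w. w \<in> Einf (k-1) \<and> f (k-1) w = z k)" using zstep[OF kn] False by simp
      then show "z (k-1) \<in> Einf (k-1)" using someI_ex[OF ex] by simp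
    qed
  qed
  have zE: "z k \<in> Einf k" if "k \<le> n" for k using inv[of "nat (n - k)"] that by simp
  show ?thesis
  proof (intro exI[of _ z] conjI allI impI)
    show "z n = x0" by (rule zn)
    show "z k \<in> V k" if "k \<le> n" for k using zE[OF that] Einf_V by blast
    show "g k (z k) = z (k-1)" if "even k \<and> k \<le> n" for k using zstep[of k] that by simp
    show "f k (z k) = z (k+1)" if "even k \<and> k < n" for k
    proof -
      have kn: "k + 1 \<le> n" using that by simp
      have od: "\<not> even (k+1)" using that by simp
      have ex: "\<exists>w. w \<in> Einf (k+1-1) \<and> f (k+1-1) w = z (k+1)" by (rule Einf_odd[OF od zE[OF kn]])
      have "z (k+1-1) = (SOME w. w \<in> Einf (k+1-1) \<and> f (k+1-1) w = z (k+1))" using zstep[OF kn] od by simp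
      then have "f (k+1-1) (z (k+1-1)) = z (k+1)" using someI_ex[OF ex] by simp
      then show ?thesis by simp
    qed
  qed
qed

lemma caseI:
  assumes x0: "x0 \<in> Einf n" "x0 \<in> A" "x0 \<notin> ssum (Dinf n) C" "x0 \<noteq> 0"
    and AA: "subspace A" and CC: "subspace C" "C \<subseteq> V n"
  shows "splits n A C"
proof -
  from inf_thread[OF x0(1)] obtain z where zc: "z n = x0 \<and> (\<forall>k\<le>n. z k \<in> V k) \<and> (\<forall>k. even k \<and> k \<le> n \<longrightarrow> g k (z k) = z (k-1))
            \<and> (\<forall>k. even k \<and> k < n \<longrightarrow> f k (z k) = z (k+1))" ..
  note z = conjunct1[OF zc] conjunct1[OF conjunct2[OF zc]] conjunct1[OF conjunct2[OF conjunct2[OF zc]]]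
    conjunct2[OF conjunct2[OF conjunct2[OF zc]]]
  have thz: "thr c n z" for c unfolding thr_def using z by auto
  have nv: "z j \<noteq> 0" if "j \<le> n" for j
  proof
    assume "z j = 0"
    then have "x0 \<in> Dinf n" unfolding Dinf_def using thz[of j] z(1) that by blast
    moreover have "x0 = x0 + 0" by simp
    ultimately have "x0 \<in> ssum (Dinf n) C" unfolding ssum_def using subspace_0[OF CC(1)] by blast
    then show False using x0(3) by simp
  qed
  show ?thesis
  proof (rule GL_splits[of n z Dinf C])
    show "z k \<in> V k" if "k \<le> n" for k using z(2) that by simp
    show "g k (z k) = z (k-1)" if "even k" "k \<le> n" for k using z(3) that by simp
    show "f k (z k) = z (k+1) \<and> z (k+1) \<noteq> 0" if "even k" "k < n" "z k \<noteq> 0" for k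
      using z(4) that nv[of "k+1"] by simp
    show "z n \<noteq> 0" "z n \<notin> ssum (Dinf n) C" unfolding z(1) using x0 by simp_all
    show "subspace C" "C \<subseteq> V n" using CC by auto
    show "subspace (Dinf k) \<and> Dinf k \<subseteq> V k" if "k \<le> n" "z k \<noteq> 0" for k
      using Dinf_sub Dinf_V by simp
    show "f k ` Dinf k \<subseteq> Dinf (k+1)" if "even k" "k < n" "z (k-1) \<noteq> 0" for k
      using Dinf_up[OF that(1)] by blast
    show "v \<in> Dinf k" if "even k" "k \<le> n" "z (k-1) \<noteq> 0" "v \<in> V k" "g k v \<in> Dinf (k-1)" for k v
      by (rule Dinf_down[OF that(1) that(4) that(5)])
    show "f k ` V k \<subseteq> Dinf (k+1)" if "even k" "k < n" "z k = 0" "z (k+1) \<noteq> 0" for k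
      using nv[of k] that by simp
    show "subspace A" "z n \<in> A" unfolding z(1) using AA x0 by simp_all
  qed
qed

end

context zz begin

lemma mod_notin:
  assumes "subspace A" "subspace C" "C \<subseteq> A" "x0 \<in> A" "x0 \<notin> C" "T \<inter> A \<subseteq> C"
  shows "x0 \<notin> ssum T C"
proof
  assume "x0 \<in> ssum T C"
  then obtain t c where tc: "t \<in> T" "c \<in> C" "x0 = t + c" unfolding ssum_def by blast
  have "t = x0 - c" using tc(3) by simp
  then have "t \<in> A" using subspace_diff[OF assms(1) assms(4)] tc(2) assms(3) by blast
  then have "t \<in> C" using tc(1) assms(6) by blast
  then have "t + c \<in> C" using subspace_add[OF assms(2) _ tc(2)] by blast
  then show False using tc(3) assms(5) by simp
qed

lemma dieR_big: "n \<le> c \<Longrightarrow> dieR c n = {0}"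
proof
  assume "n \<le> c"
  then have m: "min c n = n" by simp
  show "dieR c n \<subseteq> {0}" unfolding dieR_def m by auto
  show "{0} \<subseteq> dieR c n" using subspace_0[OF dieR_sub] by simp
qed

lemma reach_top: "reach n n = V n"
proof
  show "reach n n \<subseteq> V n" by (rule reach_V) simp
  show "V n \<subseteq> reach n n"
  proof
    fix v assume "v \<in> V n"
    then have "thr n n (\<lambda>j. v)" by (rule thr_single)
    then show "v \<in> reach n n" unfolding reach_def by blast
  qed
qed

lemma thr_ext_down:
  assumes "thr a n y" "even a" "a \<le> n"
  shows "thr (a-1) n (y(a-1 := g a (y a)))"
proof -
  have ya: "y a \<in> V a" using thrD1[OF assms(1) order_refl assms(3)] .
  show ?thesis unfolding thr_def
  proof (intro conjI allI impI)
    fix j assume j: "a - 1 \<le> j \<and> j \<le> n"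
    show "(y(a - 1 := g a (y a))) j \<in> V j"
    proof (cases "j = a - 1")
      case True then show ?thesis using gmap[OF assms(2) ya] by simp
    next
      case False then show ?thesis using thrD1[OF assms(1)] j by simp
    qed
  next
    fix j assume j: "even j \<and> a - 1 < j \<and> j \<le> n"
    show "g j ((y(a - 1 := g a (y a))) j) = (y(a - 1 := g a (y a))) (j - 1)"
    proof (cases "j = a")
      case True then show ?thesis by simp
    next
      case False
      then have "a < j" using j by simp
      then show ?thesis using thrD2[OF assms(1)] j by simp
    qed
  next
    fix j assume j: "even j \<and> a - 1 \<le> j \<and> j < n"
    then have "j \<noteq> a - 1" using assms(2) by auto
    then have "a \<le> j" using j by simp
    then show "f j ((y(a - 1 := g a (y a))) j) = (y(a - 1 := g a (y a))) (j + 1)"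
      using thrD3[OF assms(1)] j \<open>j \<noteq> a - 1\<close> by simp
  qed
qed

lemma left_split:
  assumes AA: "subspace A" and CC: "subspace C" and CA: "C \<subseteq> A" and AV: "A \<subseteq> V n" and AC: "\<not> A \<subseteq> C"
  shows "splits n A C"
proof -
  have CV: "C \<subseteq> V n" using CA AV by simp
  show ?thesis
  proof (cases "\<exists>c. \<not> dieR c n \<inter> A \<subseteq> C")
    case True
    define Pd where "Pd c \<longleftrightarrow> \<not> dieR c n \<inter> A \<subseteq> C" for c
    from True obtain c where c: "Pd c" unfolding Pd_def ..
    have big: "\<not> Pd c" if "n \<le> c" for c unfolding Pd_def dieR_big[OF that] using subspace_0[OF CC] by blast
    have cn: "c < n" using big[of c] c by linarith
    define m0 where "m0 = (LEAST m. Pd (n - int m))"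
    have ex: "Pd (n - int (nat (n - c)))" using c cn by simp
    have P0: "Pd (n - int m0)" unfolding m0_def by (rule LeastI[of "\<lambda>m. Pd (n - int m)", OF ex])
    define c0 where "c0 = n - int m0"
    have Pc0: "Pd c0" using P0 c0_def by simp
    have notP: "\<not> Pd c'" if "c0 < c'" for c'
    proof (cases "n \<le> c'")
      case True then show ?thesis using big by simp
    next
      case False
      then have "nat (n - c') < m0" using that c0_def by simp
      then have "\<not> Pd (n - int (nat (n - c')))" unfolding m0_def by (rule not_less_Least)
      then show ?thesis using False by simp
    qed
    have c0n: "c0 < n" using Pc0 big[of c0] by linarith
    have odd0: "odd c0"
    proof
      assume ev: "even c0"
      have "dieR c0 n \<subseteq> dieR (c0+1) n"
      proof
        fix v assume "v \<in> dieR c0 n"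
        then obtain y where y: "thr c0 n y" "y n = v" "y c0 = 0" unfolding dieR_def using c0n by (auto simp: min_def)
        have "f c0 (y c0) = y (c0+1)" by (rule thrD3[OF y(1) ev order_refl c0n])
        then have "y (c0+1) = 0" using y(3) ev by simp
        moreover have "thr (c0+1) n y" by (rule thr_mono[OF y(1)]) simp_all
        moreover have "min (c0+1) n = c0 + 1" using c0n by simp
        ultimately show "v \<in> dieR (c0+1) n" unfolding dieR_def using y(2) by auto
      qed
      then have "Pd (c0+1)" using Pc0 unfolding Pd_def by blast
      then show False using notP[of "c0+1"] by simp
    qed
    have small: "dieR (c0+2) n \<inter> A \<subseteq> C" using notP[of "c0+2"] unfolding Pd_def by simp
    obtain x0 where x0: "x0 \<in> dieR c0 n" "x0 \<in> A" "x0 \<notin> C" using Pc0 unfolding Pd_def by blast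
    have x0z: "x0 \<noteq> 0" using x0(3) subspace_0[OF CC] by blast
    have "x0 \<notin> ssum (dieR (c0+2) n) C" by (rule mod_notin[OF AA CC CA x0(2,3) small])
    then show ?thesis using caseE[OF odd0 c0n x0(1,2) _ x0z AA CC CV] by blast
  next
    case False
    then have Dall: "dieR c n \<inter> A \<subseteq> C" for c by blast
    have DA: "Dinf n \<inter> A \<subseteq> C"
    proof
      fix v assume v: "v \<in> Dinf n \<inter> A"
      then obtain c y where y: "c \<le> n" "thr c n y" "y n = v" "y c = 0" unfolding Dinf_def by blast
      have "min c n = c" using y(1) by simp
      then have "v \<in> dieR c n" unfolding dieR_def using y by auto
      then show "v \<in> C" using Dall[of c] v by blast
    qed
    show ?thesis
    proof (cases "Einf n \<inter> A \<subseteq> C")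
      case False
      then obtain x0 where x0: "x0 \<in> Einf n" "x0 \<in> A" "x0 \<notin> C" by blast
      have x0z: "x0 \<noteq> 0" using x0(3) subspace_0[OF CC] by blast
      have "x0 \<notin> ssum (Dinf n) C" by (rule mod_notin[OF AA CC CA x0(2,3) DA])
      then show ?thesis using caseI[OF x0(1,2) _ x0z AA CC CV] by blast
    next
      case True
      from Einf_eq[of n] obtain c1 where c10: "c1 \<le> n \<and> Einf n = reach c1 n" ..
      define Pr where "Pr c \<longleftrightarrow> reach c n \<inter> A \<subseteq> C" for c
      have ex: "Pr (n - int (nat (n - c1)))" using True c10 unfolding Pr_def by simp
      define m1 where "m1 = (LEAST m. Pr (n - int m))"
      have P1: "Pr (n - int m1)" unfolding m1_def by (rule LeastI[of "\<lambda>m. Pr (n - int m)", OF ex])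
      have notPn: "\<not> Pr n" unfolding Pr_def reach_top using AV AC by blast
      have m1pos: "m1 \<noteq> 0" using P1 notPn by (cases "m1 = 0") auto
      define a where "a = n - int m1 + 1"
      have an: "a \<le> n" using m1pos a_def by simp
      have notPa: "\<not> Pr a"
      proof -
        have "m1 - 1 < m1" using m1pos by simp
        then have "\<not> Pr (n - int (m1 - 1))" unfolding m1_def by (rule not_less_Least)
        moreover have "n - int (m1 - 1) = a" using m1pos a_def by simp
        ultimately show ?thesis by simp
      qed
      have Pa1: "Pr (a - 1)" using P1 a_def by simp
      have odda: "odd a"
      proof
        assume ev: "even a"
        have "reach a n \<subseteq> reach (a-1) n"
        proof
          fix v assume "v \<in> reach a n"
          then obtain y where y: "thr a n y" "y n = v" unfolding reach_def by blast
          have "thr (a-1) n (y(a-1 := g a (y a)))" by (rule thr_ext_down[OF y(1) ev an])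
          moreover have "(y(a-1 := g a (y a))) n = v" using y(2) an by simp
          ultimately show "v \<in> reach (a-1) n" unfolding reach_def by blast
        qed
        then show False using notPa Pa1 unfolding Pr_def by blast
      qed
      obtain x0 where x0: "x0 \<in> reach a n" "x0 \<in> A" "x0 \<notin> C" using notPa unfolding Pr_def by blast
      have x0z: "x0 \<noteq> 0" using x0(3) subspace_0[OF CC] by blast
      have small: "reach (a-1) n \<inter> A \<subseteq> C" using Pa1 unfolding Pr_def .
      have "x0 \<notin> ssum (reach (a-1) n) C" by (rule mod_notin[OF AA CC CA x0(2,3) small])
      then show ?thesis using caseO[OF odda an x0(1,2) _ x0z AA CC CV] by blast
    qed
  qed
qed

end

context zz begin

lemma vanish:
  assumes ind: "zz_indecomposable scale V f g" and sp: "splits n A C"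
    and h1: "even n \<Longrightarrow> \<forall>v\<in>A. f n v = 0" and h2: "odd n \<Longrightarrow> g (n+1) ` V (n+1) \<subseteq> C"
  shows "\<forall>k>n. V k = {0}"
proof -
  from sp obtain P where "\<exists>Q. (\<forall>k\<le>n. subspace (P k) \<and> P k \<subseteq> V k \<and> subspace (Q k) \<and> Q k \<subseteq> V k
                  \<and> P k \<inter> Q k = {0} \<and> ssum (P k) (Q k) = V k)
            \<and> (\<forall>k. even k \<and> k \<le> n \<longrightarrow> g k ` P k \<subseteq> P (k-1) \<and> g k ` Q k \<subseteq> Q (k-1))
            \<and> (\<forall>k. even k \<and> k < n \<longrightarrow> f k ` P k \<subseteq> P (k+1) \<and> f k ` Q k \<subseteq> Q (k+1))
            \<and> P n \<subseteq> A \<and> P n \<noteq> {0} \<and> C \<subseteq> Q n" unfolding splits_def ..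
  then obtain Q where PQ: "(\<forall>k\<le>n. subspace (P k) \<and> P k \<subseteq> V k \<and> subspace (Q k) \<and> Q k \<subseteq> V k
                  \<and> P k \<inter> Q k = {0} \<and> ssum (P k) (Q k) = V k)
            \<and> (\<forall>k. even k \<and> k \<le> n \<longrightarrow> g k ` P k \<subseteq> P (k-1) \<and> g k ` Q k \<subseteq> Q (k-1))
            \<and> (\<forall>k. even k \<and> k < n \<longrightarrow> f k ` P k \<subseteq> P (k+1) \<and> f k ` Q k \<subseteq> Q (k+1))
            \<and> P n \<subseteq> A \<and> P n \<noteq> {0} \<and> C \<subseteq> Q n" ..
  note P1 = conjunct1[OF PQ]
  note P2 = conjunct1[OF conjunct2[OF PQ]]
  note P3 = conjunct1[OF conjunct2[OF conjunct2[OF PQ]]]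
  note P4 = conjunct1[OF conjunct2[OF conjunct2[OF conjunct2[OF PQ]]]]
  note P5 = conjunct1[OF conjunct2[OF conjunct2[OF conjunct2[OF conjunct2[OF PQ]]]]]
  note P6 = conjunct2[OF conjunct2[OF conjunct2[OF conjunct2[OF conjunct2[OF PQ]]]]]
  have Ps: "subspace (P k)" "P k \<subseteq> V k" "subspace (Q k)" "Q k \<subseteq> V k" "P k \<inter> Q k = {0}" "ssum (P k) (Q k) = V k"
    if "k \<le> n" for k using P1 that by auto
  define U where "U k = (if k \<le> n then P k else {0})" for k
  define W where "W k = (if k \<le> n then Q k else V k)" for k
  have U0: "0 \<in> U k" for k unfolding U_def using Ps(1) subspace_0 by auto
  have W0: "0 \<in> W k" for k unfolding W_def using Ps(3) subspace_0 by auto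
  have subU: "zz_submodule scale V f g U" unfolding zz_submodule_def
  proof (intro conjI allI impI)
    fix i
    show "subspace (U i)" unfolding U_def using Ps(1) by auto
    show "U i \<subseteq> V i" unfolding U_def using Ps(2) by auto
  next
    fix i :: int assume ev: "even i"
    show "f i ` U i \<subseteq> U (i+1)"
    proof (cases "i < n")
      case True then show ?thesis unfolding U_def using P3 ev by auto
    next
      case False
      show ?thesis
      proof (cases "i = n")
        case True
        then have "\<forall>v\<in>A. f n v = 0" using h1 ev by simp
        then show ?thesis unfolding U_def using True P4 U0 by auto
      next
        case False
        then show ?thesis using \<open>\<not> i < n\<close> ev unfolding U_def by auto
      qed
    qed
    show "g i ` U i \<subseteq> U (i-1)"
    proof (cases "i \<le> n")
      case True then show ?thesis unfolding U_def using P2 ev by auto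
    next
      case False then show ?thesis using U0[of "i-1"] ev unfolding U_def by auto
    qed
  qed
  have subW: "zz_submodule scale V f g W" unfolding zz_submodule_def
  proof (intro conjI allI impI)
    fix i
    show "subspace (W i)" unfolding W_def using Ps(3) Vsub by auto
    show "W i \<subseteq> V i" unfolding W_def using Ps(4) by auto
  next
    fix i :: int assume ev: "even i"
    show "f i ` W i \<subseteq> W (i+1)"
    proof (cases "i < n")
      case True then show ?thesis unfolding W_def using P3 ev by auto
    next
      case False
      then have "W (i+1) = V (i+1)" unfolding W_def by simp
      moreover have "W i \<subseteq> V i" unfolding W_def using Ps(4) by auto
      ultimately show ?thesis using fmap[OF ev] by blast
    qed
    show "g i ` W i \<subseteq> W (i-1)"
    proof (cases "i \<le> n")
      case True then show ?thesis unfolding W_def using P2 ev by auto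
    next
      case False
      show ?thesis
      proof (cases "i - 1 \<le> n")
        case True
        then have "i = n + 1" using False by simp
        then have "odd n" using ev by simp
        then have "g (n+1) ` V (n+1) \<subseteq> C" by (rule h2)
        then show ?thesis unfolding W_def using \<open>i = n + 1\<close> P6 by auto
      next
        case False
        then show ?thesis unfolding W_def using gmap[OF ev] \<open>\<not> i \<le> n\<close> by auto
      qed
    qed
  qed
  have nzU: "zz_nonzero U" unfolding zz_nonzero_def U_def using P5 by (intro exI[of _ n]) simp
  have dec: "\<forall>i. U i \<inter> W i = {0} \<and> {u + w | u w. u \<in> U i \<and> w \<in> W i} = V i"
  proof
    fix i
    show "U i \<inter> W i = {0} \<and> {u + w | u w. u \<in> U i \<and> w \<in> W i} = V i"
    proof (cases "i \<le> n")
      case True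
      then show ?thesis unfolding U_def W_def using Ps(5,6)[OF True] unfolding ssum_def by simp
    next
      case False
      have "{u + w | u w. u \<in> {0} \<and> w \<in> V i} = V i" by auto
      then show ?thesis unfolding U_def W_def using False by simp
    qed
  qed
  have "\<not> zz_nonzero W"
  proof
    assume nzW: "zz_nonzero W"
    have "\<exists>U W. zz_submodule scale V f g U \<and> zz_submodule scale V f g W \<and>
              zz_nonzero U \<and> zz_nonzero W \<and>
              (\<forall>i. U i \<inter> W i = {0} \<and> {u + w | u w. u \<in> U i \<and> w \<in> W i} = V i)"
      by (rule exI[of _ U], rule exI[of _ W]) (intro conjI; fact)
    moreover have "\<not> (\<exists>U W. zz_submodule scale V f g U \<and> zz_submodule scale V f g W \<and>
              zz_nonzero U \<and> zz_nonzero W \<and>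
              (\<forall>i. U i \<inter> W i = {0} \<and> {u + w | u w. u \<in> U i \<and> w \<in> W i} = V i))"
      using ind unfolding zz_indecomposable_def by (rule conjunct2)
    ultimately show False by (rule notE[rotated])
  qed
  then have Wz: "W k = {0}" for k unfolding zz_nonzero_def by simp
  show ?thesis
  proof (intro allI impI)
    fix k assume "n < k"
    then have "W k = V k" unfolding W_def by simp
    then show "V k = {0}" using Wz[of k] by simp
  qed
qed

lemma C1:
  assumes ind: "zz_indecomposable scale V f g" and ev: "even i" and ni: "\<not> inj_on (f i) (V i)"
  shows "\<forall>k>i. V k = {0}"
proof -
  obtain u w where uw: "u \<in> V i" "w \<in> V i" "f i u = f i w" "u \<noteq> w" using ni unfolding inj_on_def by blast
  define A where "A = {v \<in> V i. f i v \<in> {0}}"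
  have As: "subspace A" unfolding A_def by (rule f_pre_sub[OF ev subspace_single_0])
  have "u - w \<in> A" unfolding A_def using fdiff[OF ev uw(1,2)] uw Vdiff by simp
  moreover have "u - w \<noteq> 0" using uw(4) by simp
  ultimately have nAC: "\<not> A \<subseteq> {0}" by blast
  have "splits i A {0}"
    by (rule left_split[OF As subspace_single_0 _ _ nAC]) (use As subspace_0 A_def in auto)
  then show ?thesis by (rule vanish[OF ind]) (use ev A_def in auto)
qed

lemma C2:
  assumes ind: "zz_indecomposable scale V f g" and ev: "even i" and ns: "g i ` V i \<noteq> V (i-1)"
  shows "\<forall>k>i-1. V k = {0}"
proof -
  define C where "C = g i ` V i"
  have Cs: "subspace C" unfolding C_def by (rule g_image_sub[OF ev Vsub order_refl])
  have CV: "C \<subseteq> V (i-1)" unfolding C_def using gmap[OF ev] by blast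
  have nAC: "\<not> V (i-1) \<subseteq> C" using CV ns C_def by blast
  have "splits (i-1) (V (i-1)) C"
    by (rule left_split[OF Vsub Cs CV order_refl nAC])
  then show ?thesis by (rule vanish[OF ind]) (use ev C_def in auto)
qed

lemma part1:
  assumes ind: "zz_indecomposable scale V f g"
  shows "\<exists>t\<ge>0. \<forall>i. even i \<and> i \<ge> t \<longrightarrow> inj_on (f i) (V i) \<and> g i ` V i = V (i-1)"
proof (cases "\<exists>i. even i \<and> 0 \<le> i \<and> (\<not> inj_on (f i) (V i) \<or> g i ` V i \<noteq> V (i-1))")
  case True
  then obtain i where i0: "even i \<and> 0 \<le> i \<and> (\<not> inj_on (f i) (V i) \<or> g i ` V i \<noteq> V (i-1))" ..
  note i = conjunct1[OF i0] conjunct1[OF conjunct2[OF i0]] conjunct2[OF conjunct2[OF i0]]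
  have van: "\<forall>k>i. V k = {0}"
  proof (cases "inj_on (f i) (V i)")
    case False then show ?thesis by (rule C1[OF ind i(1)])
  next
    case True
    then have "g i ` V i \<noteq> V (i-1)" using i(3) by simp
    then have c2: "\<forall>k>i-1. V k = {0}" by (rule C2[OF ind i(1)])
    show ?thesis
    proof (intro allI impI)
      fix k :: int assume "i < k"
      then have "i - 1 < k" by simp
      then show "V k = {0}" using c2 by blast
    qed
  qed
  show ?thesis
  proof (intro exI[of _ "i+2"] conjI allI impI)
    show "0 \<le> i + 2" using i(2) by simp
    fix j assume j: "even j \<and> i + 2 \<le> j"
    have "i < j" "i < j - 1" using j by simp_all
    then have Vj: "V j = {0}" "V (j-1) = {0}" using van by blast+
    show "inj_on (f j) (V j)" unfolding Vj by simp
    show "g j ` V j = V (j-1)" unfolding Vj using j by simp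
  qed
next
  case False
  show ?thesis
  proof (intro exI[of _ 0] conjI allI impI)
    show "(0::int) \<le> 0" by simp
    fix i :: int assume "even i \<and> 0 \<le> i"
    then have "inj_on (f i) (V i) \<and> g i ` V i = V (i-1)" using False by blast
    then show "inj_on (f i) (V i)" "g i ` V i = V (i-1)" by simp_all
  qed
qed

end

lemma zz_from_module: "zz_module scale V f g \<Longrightarrow> zz scale V f g"
  unfolding zz_module_def zz_def zz_axioms_def fd_subspace_def lin_between_def
  by (auto simp: image_subset_iff)

lemma reflect_module:
  assumes "zz_module scale V f g"
  shows "zz_module scale (\<lambda>i. V (-i)) (\<lambda>i. g (-i)) (\<lambda>i. f (-i))"
proof -
  have a1: "vector_space scale" and a2: "\<forall>i. fd_subspace scale (V i)"
    and a3: "\<forall>i. even i \<longrightarrow> lin_between scale (V i) (V (i + 1)) (f i) \<and> lin_between scale (V i) (V (i - 1)) (g i)"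
    using assms unfolding zz_module_def by auto
  show ?thesis unfolding zz_module_def
  proof (intro conjI allI impI)
    show "vector_space scale" by (rule a1)
    fix i :: int show "fd_subspace scale (V (-i))" using a2 by (rule spec)
  next
    fix i :: int assume ev: "even i"
    have ev': "even (-i)" using ev by simp
    have l: "lin_between scale (V (-i)) (V (-i + 1)) (f (-i)) \<and> lin_between scale (V (-i)) (V (-i - 1)) (g (-i))"
      using a3[rule_format, OF ev'] .
    have e1: "- (i + 1) = -i - 1" "- (i - 1) = -i + 1" by simp_all
    show "lin_between scale (V (- i)) (V (- (i + 1))) (g (- i))" unfolding e1 using l by (rule conjunct2)
    show "lin_between scale (V (- i)) (V (- (i - 1))) (f (- i))" unfolding e1 using l by (rule conjunct1)
  qed
qed

lemma reflect_sub:
  assumes "zz_submodule scale (\<lambda>i. V (-i)) (\<lambda>i. g (-i)) (\<lambda>i. f (-i)) U"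
  shows "zz_submodule scale V f g (\<lambda>i. U (-i))"
proof -
  have a1: "\<forall>i. module.subspace scale (U i) \<and> U i \<subseteq> V (- i)"
    and a2: "\<forall>i. even i \<longrightarrow> g (- i) ` U i \<subseteq> U (i + 1) \<and> f (- i) ` U i \<subseteq> U (i - 1)"
    using assms unfolding zz_submodule_def by auto
  show ?thesis unfolding zz_submodule_def
  proof (intro conjI allI impI)
    fix i :: int
    show "module.subspace scale (U (- i))" using a1[rule_format, of "-i"] by (rule conjunct1)
    show "U (- i) \<subseteq> V i" using a1[rule_format, of "-i"] by simp
  next
    fix i :: int assume ev: "even i"
    have "even (-i)" using ev by simp
    then have h: "g (- (-i)) ` U (-i) \<subseteq> U (-i + 1) \<and> f (- (-i)) ` U (-i) \<subseteq> U (-i - 1)" by (rule a2[rule_format])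
    have e: "-i + 1 = - (i - 1)" "-i - 1 = -(i + 1)" by simp_all
    show "f i ` U (- i) \<subseteq> U (- (i + 1))" using conjunct2[OF h] unfolding e minus_minus .
    show "g i ` U (- i) \<subseteq> U (- (i - 1))" using conjunct1[OF h] unfolding e minus_minus .
  qed
qed

lemma reflect_indec:
  assumes "zz_indecomposable scale V f g"
  shows "zz_indecomposable scale (\<lambda>i. V (-i)) (\<lambda>i. g (-i)) (\<lambda>i. f (-i))"
  unfolding zz_indecomposable_def
proof (intro conjI notI)
  have "zz_nonzero V" using assms unfolding zz_indecomposable_def by (rule conjunct1)
  then obtain i where "V i \<noteq> {0}" unfolding zz_nonzero_def ..
  then show "zz_nonzero (\<lambda>i. V (- i))" unfolding zz_nonzero_def by (intro exI[of _ "-i"]) simp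
next
  assume "\<exists>U W. zz_submodule scale (\<lambda>i. V (- i)) (\<lambda>i. g (- i)) (\<lambda>i. f (- i)) U \<and>
          zz_submodule scale (\<lambda>i. V (- i)) (\<lambda>i. g (- i)) (\<lambda>i. f (- i)) W \<and>
          zz_nonzero U \<and> zz_nonzero W \<and>
          (\<forall>i. U i \<inter> W i = {0} \<and> {u + w |u w. u \<in> U i \<and> w \<in> W i} = V (- i))"
  then obtain U where "\<exists>W. zz_submodule scale (\<lambda>i. V (- i)) (\<lambda>i. g (- i)) (\<lambda>i. f (- i)) U \<and>
          zz_submodule scale (\<lambda>i. V (- i)) (\<lambda>i. g (- i)) (\<lambda>i. f (- i)) W \<and>
          zz_nonzero U \<and> zz_nonzero W \<and>
          (\<forall>i. U i \<inter> W i = {0} \<and> {u + w |u w. u \<in> U i \<and> w \<in> W i} = V (- i))" ..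
  then obtain W where UW0: "zz_submodule scale (\<lambda>i. V (- i)) (\<lambda>i. g (- i)) (\<lambda>i. f (- i)) U \<and>
          zz_submodule scale (\<lambda>i. V (- i)) (\<lambda>i. g (- i)) (\<lambda>i. f (- i)) W \<and>
          zz_nonzero U \<and> zz_nonzero W \<and>
          (\<forall>i. U i \<inter> W i = {0} \<and> {u + w |u w. u \<in> U i \<and> w \<in> W i} = V (- i))" ..
  note UW = conjunct1[OF UW0] conjunct1[OF conjunct2[OF UW0]] conjunct1[OF conjunct2[OF conjunct2[OF UW0]]]
    conjunct1[OF conjunct2[OF conjunct2[OF conjunct2[OF UW0]]]] conjunct2[OF conjunct2[OF conjunct2[OF conjunct2[OF UW0]]]]
  have nU: "zz_nonzero (\<lambda>i. U (-i))"
  proof -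
    from UW(3) obtain i where "U i \<noteq> {0}" unfolding zz_nonzero_def ..
    then show ?thesis unfolding zz_nonzero_def by (intro exI[of _ "-i"]) simp
  qed
  have nW: "zz_nonzero (\<lambda>i. W (-i))"
  proof -
    from UW(4) obtain i where "W i \<noteq> {0}" unfolding zz_nonzero_def ..
    then show ?thesis unfolding zz_nonzero_def by (intro exI[of _ "-i"]) simp
  qed
  have d: "\<forall>i. U (-i) \<inter> W (-i) = {0} \<and> {u + w |u w. u \<in> U (-i) \<and> w \<in> W (-i)} = V i"
  proof
    fix i show "U (-i) \<inter> W (-i) = {0} \<and> {u + w |u w. u \<in> U (-i) \<and> w \<in> W (-i)} = V i"
    proof -
      have "U (-i) \<inter> W (-i) = {0} \<and> {u + w |u w. u \<in> U (-i) \<and> w \<in> W (-i)} = V (- (-i))"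
        by (rule spec[OF UW(5), of "-i"])
      then show ?thesis by simp
    qed
  qed
  note s1 = reflect_sub[OF UW(1)] and s2 = reflect_sub[OF UW(2)]
  have "\<exists>U W. zz_submodule scale V f g U \<and> zz_submodule scale V f g W \<and>
              zz_nonzero U \<and> zz_nonzero W \<and>
              (\<forall>i. U i \<inter> W i = {0} \<and> {u + w | u w. u \<in> U i \<and> w \<in> W i} = V i)"
    by (rule exI[of _ "\<lambda>i. U (-i)"], rule exI[of _ "\<lambda>i. W (-i)"]) (intro conjI; fact)
  moreover have "\<not> (\<exists>U W. zz_submodule scale V f g U \<and> zz_submodule scale V f g W \<and>
              zz_nonzero U \<and> zz_nonzero W \<and>
              (\<forall>i. U i \<inter> W i = {0} \<and> {u + w | u w. u \<in> U i \<and> w \<in> W i} = V i))"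
    using assms unfolding zz_indecomposable_def by (rule conjunct2)
  ultimately show False by (rule notE[rotated])
qed

theorem lemma3:
  fixes scale :: "'a::field \<Rightarrow> 'v::ab_group_add \<Rightarrow> 'v"
    and V :: "int \<Rightarrow> 'v set" and f g :: "int \<Rightarrow> 'v \<Rightarrow> 'v"
  assumes "zz_module scale V f g"
    and "zz_indecomposable scale V f g"
  shows "(\<exists>t::int. t \<ge> 0 \<and> (\<forall>i. even i \<and> i \<ge> t \<longrightarrow>
              inj_on (f i) (V i) \<and> g i ` V i = V (i - 1)))
       \<and> (\<exists>s::int. s \<le> 0 \<and> (\<forall>i. even i \<and> i \<le> s \<longrightarrow>
              f i ` V i = V (i + 1) \<and> inj_on (g i) (V i)))"
proof
  interpret zz scale V f g by (rule zz_from_module[OF assms(1)])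
  show "\<exists>t::int. t \<ge> 0 \<and> (\<forall>i. even i \<and> i \<ge> t \<longrightarrow> inj_on (f i) (V i) \<and> g i ` V i = V (i - 1))"
    using part1[OF assms(2)] by blast
next
  interpret r: zz scale "\<lambda>i. V (-i)" "\<lambda>i. g (-i)" "\<lambda>i. f (-i)"
    by (rule zz_from_module[OF reflect_module[OF assms(1)]])
  from r.part1[OF reflect_indec[OF assms(2)]] obtain t where
    t0: "t \<ge> 0 \<and> (\<forall>i. even i \<and> i \<ge> t \<longrightarrow> inj_on (g (-i)) (V (-i)) \<and> f (-i) ` V (-i) = V (-(i-1)))" ..
  note t = conjunct1[OF t0] conjunct2[OF t0]
  show "\<exists>s::int. s \<le> 0 \<and> (\<forall>i. even i \<and> i \<le> s \<longrightarrow> f i ` V i = V (i + 1) \<and> inj_on (g i) (V i))"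
  proof (intro exI[of _ "-t"] conjI allI impI)
    show "-t \<le> 0" using t(1) by simp
    fix i assume i: "even i \<and> i \<le> -t"
    then have "even (-i) \<and> -i \<ge> t" by simp
    then have "inj_on (g (-(-i))) (V (-(-i))) \<and> f (-(-i)) ` V (-(-i)) = V (-((-i)-1))" using t(2) by blast
    moreover have "-((-i)-1) = i + 1" by simp
    ultimately show "f i ` V i = V (i + 1)" "inj_on (g i) (V i)" by (simp_all add: add.commute)
  qed
qed

end
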